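(* Equip $K\hat N^\infty_*=\bigoplus_{n\ge1}K\hat N^n$ with the bilinear operations defined on names $\vec v,\vec w$ of degree $\ge1$ by $\vec v\prec\vec w:=\vec v_l\vee(\vec v_r\star\vec w)$ and $\vec v\succ\vec w:=(\vec v\star\vec w_l)\vee\vec w_r$. Then $(K\hat N^\infty_*,\prec,\succ)$ is a dendriform dialgebra with $\prec+\succ=\star$, and it is generated by $(1)$. Moreover, on $K\hat N^\infty=K()\oplus K\hat N^\infty_*$, setting $\vec v\prec():=\vec v=:()\succ\vec v$ and $\vec v\succ():=0=:()\prec\vec v$ for $\vec v\neq()$ (with $()\prec()$, $()\succ()$ undefined and $()\star()=()$), the dendriform axioms continue to hold whenever all terms are defined, and $\vec v\star()=()\star\vec v=\vec v$ for all $\vec v$.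
   Context: $K$ is a field of characteristic zero. $\hat N^0=\{()\}$ and for $n\ge1$, $\hat N^n$ is the set of names of planar rooted binary trees with $n$ internal vertices; every element of $\hat N^n$, $n\ge1$, is uniquely $\vec v_l\vee\vec v_r:=(\vec v_l,1,p+1+\vec v_r)$ with $\vec v_l\in\hat N^p,\vec v_r\in\hat N^q$, $p+q+1=n$, where $k+(w_1,\dots,w_q)=(w_1+k,\dots,w_q+k)$; $\vee$ is extended bilinearly. For $\vec v\in\hat N^n,\vec w\in\hat N^m$: $\vec v\nearrow\vec w=(\vec v,n\triangleright w_1,\dots,n\triangleright w_m)$ with $n\triangleright a=a+n$ for $a\neq1$, $n\triangleright1=1$; $\vec v\nwarrow\vec w=(\vec v,n+\vec w)$. $\vec v\star\vec w$ is the sum of all $\vec t\in\hat N^{n+m}$ with $\vec v\nearrow\vec w\le\vec t\le\vec v\nwarrow\vec w$ (componentwise order), extended bilinearly, with $()\star\vec v=\vec v\star()=\vec v$. A dendriform dialgebra is a vector space $E$ with bilinear operations $\prec,\succ$ such that, with $x\star y:=x\prec y+x\succ y$: $(x\prec y)\prec z=x\prec(y\star z)$, $(x\succ y)\prec z=x\succ(y\prec z)$, $(x\star y)\succ z=x\succ(y\succ z)$ for all $x,y,z$. *)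

theory Defs
  imports Main "HOL-Library.Function_Algebras"
begin

section \<open>Names of planar rooted binary trees\<close>

definition graft :: "nat list \<Rightarrow> nat list \<Rightarrow> nat list" where
  "graft l r = l @ [1] @ map (\<lambda>x. x + (length l + 1)) r"

inductive name :: "nat list \<Rightarrow> bool" where
  name_Nil: "name []"
| name_graft: "name l \<Longrightarrow> name r \<Longrightarrow> name (graft l r)"

text \<open>hat N^n: names of degree (= length = number of internal vertices) n\<close>
definition Nhat :: "nat \<Rightarrow> nat list set" where
  "Nhat n = {v. name v \<and> length v = n}"

definition split_name :: "nat list \<Rightarrow> nat list \<times> nat list" where
  "split_name v = (THE p. name (fst p) \<and> name (snd p) \<and> v = graft (fst p) (snd p))"

definition lft :: "nat list \<Rightarrow> nat list" where "lft v = fst (split_name v)"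
definition rgt :: "nat list \<Rightarrow> nat list" where "rgt v = snd (split_name v)"

definition tri :: "nat \<Rightarrow> nat \<Rightarrow> nat" where
  "tri n a = (if a = 1 then 1 else a + n)"

definition nearrow :: "nat list \<Rightarrow> nat list \<Rightarrow> nat list" where
  "nearrow v w = v @ map (tri (length v)) w"

definition nwarrow :: "nat list \<Rightarrow> nat list \<Rightarrow> nat list" where
  "nwarrow v w = v @ map (\<lambda>a. a + length v) w"

section \<open>The vector space K hat N^\<infinity> as finitely supported functions on names\<close>

definition supp :: "(nat list \<Rightarrow> 'a::zero) \<Rightarrow> nat list set" where
  "supp f = {v. f v \<noteq> 0}"

text \<open>K hat N^\<infinity> (all degrees, including ()) and K hat N^\<infinity>_* (degrees \<ge> 1)\<close>
definition Vspace :: "(nat list \<Rightarrow> 'a::field_char_0) set" where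
  "Vspace = {f. finite (supp f) \<and> supp f \<subseteq> {v. name v}}"

definition Vstar :: "(nat list \<Rightarrow> 'a::field_char_0) set" where
  "Vstar = {f \<in> Vspace. f [] = 0}"

definition bas :: "nat list \<Rightarrow> nat list \<Rightarrow> 'a::field_char_0" where
  "bas v = (\<lambda>t. if t = v then 1 else 0)"

definition smul :: "'a::field_char_0 \<Rightarrow> (nat list \<Rightarrow> 'a) \<Rightarrow> nat list \<Rightarrow> 'a" where
  "smul c f = (\<lambda>t. c * f t)"

definition lin2 :: "(nat list \<Rightarrow> nat list \<Rightarrow> nat list \<Rightarrow> 'a::field_char_0)
    \<Rightarrow> (nat list \<Rightarrow> 'a) \<Rightarrow> (nat list \<Rightarrow> 'a) \<Rightarrow> nat list \<Rightarrow> 'a" where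
  "lin2 b f g = (\<lambda>t. \<Sum>v\<in>supp f. \<Sum>w\<in>supp g. f v * g w * b v w t)"

definition vee_b :: "nat list \<Rightarrow> nat list \<Rightarrow> nat list \<Rightarrow> 'a::field_char_0" where
  "vee_b v w = bas (graft v w)"

definition star_b :: "nat list \<Rightarrow> nat list \<Rightarrow> nat list \<Rightarrow> 'a::field_char_0" where
  "star_b v w = (if v = [] then bas w else if w = [] then bas v else
     (\<lambda>t. if t \<in> Nhat (length v + length w) \<and> list_all2 (\<le>) (nearrow v w) t
              \<and> list_all2 (\<le>) t (nwarrow v w) then 1 else 0))"

definition vee :: "(nat list \<Rightarrow> 'a::field_char_0) \<Rightarrow> (nat list \<Rightarrow> 'a) \<Rightarrow> nat list \<Rightarrow> 'a" where
  "vee = lin2 vee_b"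

definition star :: "(nat list \<Rightarrow> 'a::field_char_0) \<Rightarrow> (nat list \<Rightarrow> 'a) \<Rightarrow> nat list \<Rightarrow> 'a" where
  "star = lin2 star_b"

text \<open>The value at ((),()) is a junk value 0; it is treated as undefined below.\<close>
definition prec_b :: "nat list \<Rightarrow> nat list \<Rightarrow> nat list \<Rightarrow> 'a::field_char_0" where
  "prec_b v w = (if v \<noteq> [] \<and> w \<noteq> [] then vee (bas (lft v)) (star (bas (rgt v)) (bas w))
     else if v \<noteq> [] \<and> w = [] then bas v else 0)"

definition succ_b :: "nat list \<Rightarrow> nat list \<Rightarrow> nat list \<Rightarrow> 'a::field_char_0" where
  "succ_b v w = (if v \<noteq> [] \<and> w \<noteq> [] then vee (star (bas v) (bas (lft w))) (bas (rgt w))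
     else if v = [] \<and> w \<noteq> [] then bas w else 0)"

definition prec :: "(nat list \<Rightarrow> 'a::field_char_0) \<Rightarrow> (nat list \<Rightarrow> 'a) \<Rightarrow> nat list \<Rightarrow> 'a" where
  "prec = lin2 prec_b"

definition succ :: "(nat list \<Rightarrow> 'a::field_char_0) \<Rightarrow> (nat list \<Rightarrow> 'a) \<Rightarrow> nat list \<Rightarrow> 'a" where
  "succ = lin2 succ_b"

text \<open>Partial versions on K hat N^\<infinity>: undefined (None) exactly when the bilinear expansion
  involves () \<prec> () resp. () \<succ> ().\<close>
definition prec_o :: "(nat list \<Rightarrow> 'a::field_char_0) \<Rightarrow> (nat list \<Rightarrow> 'a) \<Rightarrow> (nat list \<Rightarrow> 'a) option" where
  "prec_o f g = (if f [] \<noteq> 0 \<and> g [] \<noteq> 0 then None else Some (prec f g))"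

definition succ_o :: "(nat list \<Rightarrow> 'a::field_char_0) \<Rightarrow> (nat list \<Rightarrow> 'a) \<Rightarrow> (nat list \<Rightarrow> 'a) option" where
  "succ_o f g = (if f [] \<noteq> 0 \<and> g [] \<noteq> 0 then None else Some (succ f g))"

definition dendriform :: "(nat list \<Rightarrow> 'a::field_char_0) set
    \<Rightarrow> ((nat list \<Rightarrow> 'a) \<Rightarrow> (nat list \<Rightarrow> 'a) \<Rightarrow> nat list \<Rightarrow> 'a)
    \<Rightarrow> ((nat list \<Rightarrow> 'a) \<Rightarrow> (nat list \<Rightarrow> 'a) \<Rightarrow> nat list \<Rightarrow> 'a) \<Rightarrow> bool" where
  "dendriform E l r \<longleftrightarrow>
     \<comment> \<open>E is a vector space (subspace of the function space)\<close>
     0 \<in> E \<and> (\<forall>x\<in>E. \<forall>y\<in>E. x + y \<in> E) \<and> (\<forall>c. \<forall>x\<in>E. smul c x \<in> E) \<and>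
     \<comment> \<open>l, r are bilinear operations on E\<close>
     (\<forall>x\<in>E. \<forall>y\<in>E. l x y \<in> E \<and> r x y \<in> E) \<and>
     (\<forall>x\<in>E. \<forall>y\<in>E. \<forall>z\<in>E. l (x + y) z = l x z + l y z \<and> l z (x + y) = l z x + l z y
                       \<and> r (x + y) z = r x z + r y z \<and> r z (x + y) = r z x + r z y) \<and>
     (\<forall>c. \<forall>x\<in>E. \<forall>y\<in>E. l (smul c x) y = smul c (l x y) \<and> l x (smul c y) = smul c (l x y)
                     \<and> r (smul c x) y = smul c (r x y) \<and> r x (smul c y) = smul c (r x y)) \<and>
     \<comment> \<open>dendriform axioms, with x \<star> y := l x y + r x y\<close>
     (\<forall>x\<in>E. \<forall>y\<in>E. \<forall>z\<in>E.
        l (l x y) z = l x (l y z + r y z) \<and>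
        l (r x y) z = r x (l y z) \<and>
        r (l x y + r x y) z = r x (r y z))"

inductive_set gen_by :: "((nat list \<Rightarrow> 'a::field_char_0) \<Rightarrow> (nat list \<Rightarrow> 'a) \<Rightarrow> nat list \<Rightarrow> 'a)
    \<Rightarrow> ((nat list \<Rightarrow> 'a) \<Rightarrow> (nat list \<Rightarrow> 'a) \<Rightarrow> nat list \<Rightarrow> 'a) \<Rightarrow> (nat list \<Rightarrow> 'a)
    \<Rightarrow> (nat list \<Rightarrow> 'a) set"
  for l r x0 where
  gen_base: "x0 \<in> gen_by l r x0"
| gen_zero: "0 \<in> gen_by l r x0"
| gen_add: "x \<in> gen_by l r x0 \<Longrightarrow> y \<in> gen_by l r x0 \<Longrightarrow> x + y \<in> gen_by l r x0"
| gen_smul: "x \<in> gen_by l r x0 \<Longrightarrow> smul c x \<in> gen_by l r x0"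
| gen_l: "x \<in> gen_by l r x0 \<Longrightarrow> y \<in> gen_by l r x0 \<Longrightarrow> l x y \<in> gen_by l r x0"
| gen_r: "x \<in> gen_by l r x0 \<Longrightarrow> y \<in> gen_by l r x0 \<Longrightarrow> r x y \<in> gen_by l r x0"

end

theory Submission
  imports Defs
begin


lemma length_graft[simp]: "length (graft l r) = length l + 1 + length r"
  by (simp add: graft_def)

lemma graft_nth: "i < length (graft l r) \<Longrightarrow> graft l r ! i =
  (if i < length l then l!i else if i = length l then 1 else r!(i - length l - 1) + length l + 1)"
  by (auto simp: graft_def nth_append)

lemma graft_ne[simp]: "graft l r \<noteq> []"
  by (simp add: graft_def)

lemma name_bound: "name t \<Longrightarrow> i < length t \<Longrightarrow> 1 \<le> t!i \<and> t!i \<le> length t"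
proof (induction arbitrary: i rule: name.induct)
  case name_Nil thus ?case by simp
next
  case (name_graft l r)
  show ?case
  proof (cases "i < length l")
    case True thus ?thesis using name_graft.IH(1)[of i] name_graft.prems by (simp add: graft_nth)
  next
    case False
    show ?thesis
    proof (cases "i = length l")
      case True thus ?thesis by (simp add: graft_nth)
    next
      case False
      then have "i - length l - 1 < length r" using \<open>\<not> i < length l\<close> name_graft.prems by simp
      thus ?thesis using name_graft.IH(2)[of "i - length l - 1"] name_graft.prems False \<open>\<not> i < length l\<close>
        by (simp add: graft_nth)
    qed
  qed
qed

lemma name_cond: "name t \<Longrightarrow> j < i \<Longrightarrow> i < length t \<Longrightarrow> t!i \<le> j+1 \<Longrightarrow> t!i \<le> t!j"
proof (induction arbitrary: i j rule: name.induct)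
  case name_Nil thus ?case by simp
next
  case (name_graft l r)
  consider "i < length l" | "i = length l" | "i > length l" by linarith
  thus ?case
  proof cases
    case 1 thus ?thesis using name_graft by (simp add: graft_nth)
  next
    case 2 thus ?thesis using name_graft name_bound[OF name_graft.hyps(1), of j] by (simp add: graft_nth)
  next
    case 3
    have ir: "i - length l - 1 < length r" using 3 name_graft.prems by simp
    have b: "1 \<le> r!(i - length l - 1)" using name_bound[OF name_graft.hyps(2) ir] by simp
    have tj: "graft l r ! i = r!(i - length l - 1) + length l + 1" using 3 name_graft.prems by (simp add: graft_nth)
    hence "j > length l" using name_graft.prems b by simp
    hence "j - length l - 1 < i - length l - 1" using name_graft.prems by simp
    moreover have "r!(i - length l - 1) \<le> (j - length l - 1) + 1" using tj name_graft.prems \<open>j > length l\<close> by simp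
    ultimately have "r!(i - length l - 1) \<le> r!(j - length l - 1)"
      using name_graft.IH(2) ir by blast
    thus ?thesis using tj \<open>j > length l\<close> name_graft.prems by (simp add: graft_nth)
  qed
qed

lemma graft_inj:
  assumes "name l" "name r" "name l'" "name r'" "graft l r = graft l' r'"
  shows "l = l' \<and> r = r'"
proof -
  have len: "length l = length l'"
  proof (rule ccontr)
    assume "length l \<noteq> length l'"
    then consider "length l < length l'" | "length l' < length l" by linarith
    thus False
    proof cases
      case 1
      have "graft l' r' ! length l' = 1" using graft_nth[of "length l'" l' r'] by simp
      moreover have "length l' < length (graft l r)" using arg_cong[OF assms(5), of length] by simp
      ultimately have "graft l r ! length l' = 1" using assms(5) by simp
      moreover have "length l' - length l - 1 < length r" using \<open>length l' < length (graft l r)\<close> 1 by simp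
      moreover have "1 \<le> r!(length l' - length l - 1)" using name_bound[OF assms(2), of "length l' - length l - 1"] \<open>length l' - length l - 1 < length r\<close> by blast
      moreover have "graft l r ! length l' = r!(length l' - length l - 1) + length l + 1"
        using graft_nth[of "length l'" l r] 1 \<open>length l' < length (graft l r)\<close> by simp
      ultimately show False by linarith
    next
      case 2
      have "graft l r ! length l = 1" using graft_nth[of "length l" l r] by simp
      moreover have "length l < length (graft l' r')" using arg_cong[OF assms(5), of length] by simp
      ultimately have "graft l' r' ! length l = 1" using assms(5) by simp
      moreover have "length l - length l' - 1 < length r'" using \<open>length l < length (graft l' r')\<close> 2 by simp
      moreover have "1 \<le> r'!(length l - length l' - 1)" using name_bound[OF assms(4), of "length l - length l' - 1"] calculation(2) by blast
      moreover have "graft l' r' ! length l = r'!(length l - length l' - 1) + length l' + 1"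
        using graft_nth[of "length l" l' r'] 2 \<open>length l < length (graft l' r')\<close> by simp
      ultimately show False by linarith
    qed
  qed
  have "l = l'" using assms(5) len unfolding graft_def by (metis append_eq_append_conv)
  moreover have "map (\<lambda>x. x + (length l + 1)) r = map (\<lambda>x. x + (length l + 1)) r'"
    using assms(5) len unfolding graft_def by simp
  hence "r = r'" by (simp add: inj_map_eq_map inj_on_def)
  ultimately show ?thesis by simp
qed

lemma split_graft: assumes "name l" "name r" shows "split_name (graft l r) = (l, r)"
  unfolding split_name_def
proof (rule the_equality)
  fix p assume "name (fst p) \<and> name (snd p) \<and> graft l r = graft (fst p) (snd p)"
  moreover note assms
  ultimately show "p = (l, r)" using graft_inj[of l r "fst p" "snd p"] by (cases p) auto
qed (use assms in auto)

lemma lft_graft[simp]: "name l \<Longrightarrow> name r \<Longrightarrow> lft (graft l r) = l"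
  by (simp add: lft_def split_graft)
lemma rgt_graft[simp]: "name l \<Longrightarrow> name r \<Longrightarrow> rgt (graft l r) = r"
  by (simp add: rgt_def split_graft)

lemma name_decomp: "name t \<Longrightarrow> t \<noteq> [] \<Longrightarrow> name (lft t) \<and> name (rgt t) \<and> t = graft (lft t) (rgt t)"
  by (cases rule: name.cases) auto

lemma finite_names: "finite {t. name t \<and> length t = n}"
proof -
  have "{t. name t \<and> length t = n} \<subseteq> {xs. set xs \<subseteq> {0..n} \<and> length xs = n}"
    by (auto simp: in_set_conv_nth dest: name_bound)
  thus ?thesis by (rule finite_subset) (rule finite_lists_length_eq, simp)
qed


definition SS :: "nat list \<Rightarrow> nat list \<Rightarrow> nat list set" where
  "SS v w = {t. name t \<and> length t = length v + length w \<and> (\<forall>i<length v. t!i = v!i)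
     \<and> (\<forall>j<length w. (w!j = 1 \<longrightarrow> t!(length v + j) \<le> length v + 1)
                    \<and> (w!j \<noteq> 1 \<longrightarrow> t!(length v + j) = w!j + length v))}"

lemma all_less_add: "(\<forall>i<(a::nat)+b. P i) \<longleftrightarrow> (\<forall>i<a. P i) \<and> (\<forall>j<b. P (a+j))"
proof safe
  fix i assume "\<forall>i<a. P i" "\<forall>j<b. P (a+j)" "i < a + b"
  show "P i"
  proof (cases "i < a")
    case True thus ?thesis using \<open>\<forall>i<a. P i\<close> by simp
  next
    case False
    hence "i = a + (i - a)" "i - a < b" using \<open>i < a + b\<close> by auto
    thus ?thesis using \<open>\<forall>j<b. P (a+j)\<close> by metis
  qed
qed auto

lemma SS_char:
  "(t \<in> Nhat (length v + length w) \<and> list_all2 (\<le>) (nearrow v w) t \<and> list_all2 (\<le>) t (nwarrow v w))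
   \<longleftrightarrow> t \<in> SS v w"
proof -
  have A: "list_all2 (\<le>) (nearrow v w) t \<longleftrightarrow> length t = length v + length w \<and>
     (\<forall>i<length v. v!i \<le> t!i) \<and> (\<forall>j<length w. tri (length v) (w!j) \<le> t!(length v + j))"
    if "length t = length v + length w"
    using that by (auto simp: list_all2_conv_all_nth nearrow_def nth_append all_less_add)
  have B: "list_all2 (\<le>) t (nwarrow v w) \<longleftrightarrow> length t = length v + length w \<and>
     (\<forall>i<length v. t!i \<le> v!i) \<and> (\<forall>j<length w. t!(length v + j) \<le> w!j + length v)"
    if "length t = length v + length w"
    using that by (auto simp: list_all2_conv_all_nth nwarrow_def nth_append all_less_add)
  show ?thesis
  proof
    assume h: "t \<in> Nhat (length v + length w) \<and> list_all2 (\<le>) (nearrow v w) t \<and> list_all2 (\<le>) t (nwarrow v w)"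
    hence n: "name t" and l: "length t = length v + length w" by (auto simp: Nhat_def)
    have a: "\<forall>i<length v. v!i \<le> t!i" "\<forall>j<length w. tri (length v) (w!j) \<le> t!(length v + j)"
      using h A[OF l] by auto
    have b: "\<forall>i<length v. t!i \<le> v!i" "\<forall>j<length w. t!(length v + j) \<le> w!j + length v"
      using h B[OF l] by auto
    have c1: "\<forall>i<length v. t!i = v!i" using a(1) b(1) by (simp add: le_antisym)
    have c2: "\<forall>j<length w. (w!j = 1 \<longrightarrow> t!(length v + j) \<le> length v + 1)
                    \<and> (w!j \<noteq> 1 \<longrightarrow> t!(length v + j) = w!j + length v)"
    proof (intro allI impI conjI)
      fix j assume j: "j < length w"
      show "w!j = 1 \<Longrightarrow> t!(length v + j) \<le> length v + 1" using b(2) j by fastforce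
      show "w!j \<noteq> 1 \<Longrightarrow> t!(length v + j) = w!j + length v" using a(2) b(2) j
        unfolding tri_def by (metis add.commute le_antisym)
    qed
    show "t \<in> SS v w" unfolding SS_def using n l c1 c2 by blast
  next
    assume h: "t \<in> SS v w"
    hence n: "name t" and l: "length t = length v + length w" by (auto simp: SS_def)
    have "\<forall>j<length w. 1 \<le> t!(length v + j)" using name_bound[OF n] l by simp
    thus "t \<in> Nhat (length v + length w) \<and> list_all2 (\<le>) (nearrow v w) t \<and> list_all2 (\<le>) t (nwarrow v w)"
      using h A[OF l] B[OF l] n l unfolding SS_def tri_def Nhat_def by auto
  qed
qed

lemma SS_Nil_left: "name w \<Longrightarrow> SS [] w = {w}"
proof -
  assume w: "name w"
  have "t = w" if "t \<in> SS [] w" for t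
  proof (rule nth_equalityI)
    show "length t = length w" using that by (simp add: SS_def)
    fix i assume "i < length t"
    thus "t!i = w!i" using that name_bound[of t i] by (simp add: SS_def) (metis le_antisym)
  qed
  moreover have "w \<in> SS [] w" using w name_bound[OF w] by (auto simp: SS_def)
  ultimately show ?thesis by blast
qed

lemma SS_Nil_right: "name v \<Longrightarrow> SS v [] = {v}"
proof -
  assume v: "name v"
  have "t = v" if "t \<in> SS v []" for t
    using that by (auto simp: SS_def intro: nth_equalityI)
  moreover have "v \<in> SS v []" using v by (auto simp: SS_def)
  ultimately show ?thesis by blast
qed

lemma bas_ind: "bas v = (\<lambda>t. if t \<in> {v} then 1 else 0)"
  by (auto simp: bas_def)

lemma star_b_SS: "name v \<Longrightarrow> name w \<Longrightarrow> star_b v w = (\<lambda>t. if t \<in> SS v w then 1 else 0)"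
  unfolding star_b_def using SS_char[of _ v w]
  by (auto simp: SS_Nil_left SS_Nil_right bas_ind)


lemma graft_nth_l[simp]: "i < length l \<Longrightarrow> graft l r ! i = l!i"
  by (simp add: graft_nth)
lemma graft_nth_m[simp]: "graft l r ! length l = 1"
  by (simp add: graft_nth)
lemma graft_nth_r[simp]: "i < length r \<Longrightarrow> graft l r ! (length l + 1 + i) = r!i + length l + 1"
  by (simp add: graft_nth)
lemma graft_nth_rS[simp]: "i < length r \<Longrightarrow> graft l r ! Suc (length l + i) = Suc (r!i + length l)"
  using graft_nth_r[of i r l] by simp
lemma graft_nth_r': "length l < i \<Longrightarrow> i < length l + 1 + length r \<Longrightarrow> graft l r ! i = r!(i - length l - 1) + length l + 1"
  by (simp add: graft_nth)

lemma SS_rec1: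
  assumes a: "name a" and b: "name b" and c: "name c" and d: "name d" and s: "s \<in> SS b (graft c d)"
  shows "graft a s \<in> SS (graft a b) (graft c d)"
proof -
  let ?v = "graft a b" and ?w = "graft c d" and ?t = "graft a s"
  have ns: "name s" and ls: "length s = length b + length ?w" using s by (auto simp: SS_def)
  have sb: "\<forall>i<length b. s!i = b!i" using s by (simp add: SS_def)
  have sw: "\<forall>j<length ?w. (?w!j = 1 \<longrightarrow> s!(length b + j) \<le> length b + 1)
                    \<and> (?w!j \<noteq> 1 \<longrightarrow> s!(length b + j) = ?w!j + length b)" using s unfolding SS_def by blast
  have "\<forall>i<length ?v. ?t!i = ?v!i"
  proof (intro allI impI)
    fix i assume i: "i < length ?v"
    consider "i < length a" | "i = length a" | "length a < i" by linarith
    thus "?t!i = ?v!i"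
    proof cases
      case 3
      have "i - length a - 1 < length b" using 3 i by simp
      thus ?thesis using 3 i ls sb by (simp add: graft_nth_r')
    qed simp_all
  qed
  moreover have "\<forall>j<length ?w. (?w!j = 1 \<longrightarrow> ?t!(length ?v + j) \<le> length ?v + 1)
                    \<and> (?w!j \<noteq> 1 \<longrightarrow> ?t!(length ?v + j) = ?w!j + length ?v)"
  proof (intro allI impI)
    fix j assume j: "j < length ?w"
    have "?t!(length ?v + j) = s!(length b + j) + length a + 1"
      using graft_nth_r[of "length b + j" s a] j ls by (simp add: add.assoc)
    thus "(?w!j = 1 \<longrightarrow> ?t!(length ?v + j) \<le> length ?v + 1)
                    \<and> (?w!j \<noteq> 1 \<longrightarrow> ?t!(length ?v + j) = ?w!j + length ?v)"
      using sw j by simp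
  qed
  ultimately show ?thesis using a ns ls unfolding SS_def by (auto intro: name_graft)
qed

lemma SS_rec2:
  assumes a: "name a" and b: "name b" and c: "name c" and d: "name d" and s: "s \<in> SS (graft a b) c"
  shows "graft s d \<in> SS (graft a b) (graft c d)"
proof -
  let ?v = "graft a b" and ?w = "graft c d" and ?t = "graft s d"
  have ns: "name s" and ls: "length s = length ?v + length c" using s by (auto simp: SS_def)
  have sv: "\<forall>i<length ?v. s!i = ?v!i" using s by (simp add: SS_def)
  have sc: "\<forall>j<length c. (c!j = 1 \<longrightarrow> s!(length ?v + j) \<le> length ?v + 1)
                    \<and> (c!j \<noteq> 1 \<longrightarrow> s!(length ?v + j) = c!j + length ?v)" using s unfolding SS_def by blast
  have "\<forall>i<length ?v. ?t!i = ?v!i" using sv ls by simp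
  moreover have "\<forall>j<length ?w. (?w!j = 1 \<longrightarrow> ?t!(length ?v + j) \<le> length ?v + 1)
                    \<and> (?w!j \<noteq> 1 \<longrightarrow> ?t!(length ?v + j) = ?w!j + length ?v)"
  proof (intro allI impI)
    fix j assume j: "j < length ?w"
    consider "j < length c" | "j = length c" | "length c < j" by linarith
    thus "(?w!j = 1 \<longrightarrow> ?t!(length ?v + j) \<le> length ?v + 1)
                    \<and> (?w!j \<noteq> 1 \<longrightarrow> ?t!(length ?v + j) = ?w!j + length ?v)"
    proof cases
      case 1 thus ?thesis using sc ls by simp
    next
      case 2
      hence "length ?v + j = length s" using ls by simp
      hence "?t!(length ?v + j) = 1" by simp
      thus ?thesis using 2 by simp
    next
      case 3
      have jd: "j - length c - 1 < length d" using 3 j by simp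
      have wj: "?w!j = d!(j - length c - 1) + length c + 1" using 3 j by (simp add: graft_nth_r')
      have "1 \<le> d!(j - length c - 1)" using name_bound[OF d jd] by simp
      moreover have "?t!(length ?v + j) = d!(j - length c - 1) + length s + 1"
        using graft_nth_r'[of s "length ?v + j" d] 3 j ls by simp
      ultimately show ?thesis using wj ls by simp
    qed
  qed
  ultimately show ?thesis using d ns ls unfolding SS_def by (auto intro: name_graft)
qed


lemma SS_excl:
  assumes a: "name a" and b: "name b" and c: "name c" and d: "name d"
    and s1: "s1 \<in> SS b (graft c d)" and s2: "s2 \<in> SS (graft a b) c"
  shows "graft a s1 \<noteq> graft s2 d"
proof
  assume e: "graft a s1 = graft s2 d"
  have l1: "length s1 = length b + length (graft c d)" and n1: "name s1" using s1 by (auto simp: SS_def)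
  have l2: "length s2 = length (graft a b) + length c" using s2 by (auto simp: SS_def)
  have "graft s2 d ! length s2 = 1" by simp
  moreover have "length s2 = length a + 1 + (length b + length c)" using l2 by simp
  moreover have i: "length b + length c < length s1" using l1 by simp
  ultimately have "s1 ! (length b + length c) + length a + 1 = 1"
    using e graft_nth_r[OF i, of a] by simp
  moreover have "1 \<le> s1 ! (length b + length c)" using name_bound[OF n1 i] by simp
  ultimately show False by simp
qed

lemma SS_rec3:
  assumes a: "name a" and b: "name b" and c: "name c" and d: "name d"
    and t: "t \<in> SS (graft a b) (graft c d)"
  shows "(\<exists>s\<in>SS b (graft c d). t = graft a s) \<or> (\<exists>s\<in>SS (graft a b) c. t = graft s d)"
proof -
  define v where "v = graft a b"
  define w where "w = graft c d"
  define n where "n = length v"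
  define m where "m = length w"
  have nn: "n = length a + 1 + length b" and mm: "m = length c + 1 + length d"
    by (simp_all add: n_def m_def v_def w_def)
  have nt: "name t" and lt: "length t = n + m" using t by (auto simp: SS_def n_def m_def v_def w_def)
  have tv: "\<forall>i<n. t!i = v!i" using t by (simp add: SS_def n_def v_def)
  have tw: "\<forall>j<m. (w!j = 1 \<longrightarrow> t!(n + j) \<le> n + 1) \<and> (w!j \<noteq> 1 \<longrightarrow> t!(n + j) = w!j + n)"
    using t unfolding SS_def n_def m_def v_def w_def by blast
  have wbig: "2 \<le> w!j" if "length c < j" "j < m" for j
  proof -
    have jd: "j - length c - 1 < length d" using that mm by simp
    have "w!j = d!(j - length c - 1) + length c + 1" using that mm by (simp add: w_def graft_nth_r')
    thus ?thesis using name_bound[OF d jd] by simp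
  qed
  have wc: "w ! length c = 1" by (simp add: w_def)
  have wpos: "1 \<le> w!j" if "j < m" for j
    using name_bound[of w j] name_graft[OF c d] that unfolding m_def w_def by blast
  have "t \<noteq> []" using lt nn by auto
  then obtain tl tr where ntl: "name tl" and ntr: "name tr" and teq: "t = graft tl tr"
    using name_decomp[OF nt] by blast
  define k where "k = length tl"
  have tk: "t!k = 1" by (simp add: teq k_def)
  have ltr: "length t = k + 1 + length tr" by (simp add: teq k_def)
  have hgt: "k + 2 \<le> t!i" if "k < i" "i < length t" for i
  proof -
    have ir: "i - k - 1 < length tr" using that ltr by simp
    have "t!i = tr!(i - k - 1) + k + 1" using that ltr unfolding teq k_def by (simp add: graft_nth_r')
    thus ?thesis using name_bound[OF ntr ir] by simp
  qed
  have tlow: "\<forall>i<k. tl!i = t!i" by (simp add: teq k_def)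
  show ?thesis
  proof (cases "t!(n + length c) = 1")
    case True
    have kk: "k = n + length c"
    proof (rule ccontr)
      assume "k \<noteq> n + length c"
      then consider "k < n + length c" | "n + length c < k" by linarith
      thus False
      proof cases
        case 1 thus False using hgt[of "n + length c"] True lt mm by simp
      next
        case 2
        define j where "j = k - n"
        have j: "length c < j" "j < m" "k = n + j" using 2 ltr lt unfolding j_def by auto
        have "t!(n+j) = w!j + n" using tw j wbig[OF j(1) j(2)] by auto
        thus False using tk j wbig[OF j(1) j(2)] by simp
      qed
    qed
    have "tl \<in> SS v c"
    proof -
      have "length tl = length v + length c" using kk k_def n_def by simp
      moreover have "\<forall>i<length v. tl!i = v!i" using tlow tv kk n_def by simp
      moreover have "\<forall>j<length c. (c!j = 1 \<longrightarrow> tl!(length v + j) \<le> length v + 1)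
                    \<and> (c!j \<noteq> 1 \<longrightarrow> tl!(length v + j) = c!j + length v)"
      proof (intro allI impI)
        fix j assume j: "j < length c"
        have "tl!(n+j) = t!(n+j)" using tlow kk j by simp
        moreover have "w!j = c!j" using j by (simp add: w_def)
        ultimately show "(c!j = 1 \<longrightarrow> tl!(length v + j) \<le> length v + 1)
                    \<and> (c!j \<noteq> 1 \<longrightarrow> tl!(length v + j) = c!j + length v)"
          using tw j mm n_def by auto
      qed
      ultimately show ?thesis using ntl unfolding SS_def by blast
    qed
    moreover have "tr = d"
    proof (rule nth_equalityI)
      show ld: "length tr = length d" using ltr lt kk mm by simp
      fix j assume j: "j < length tr"
      have "t!(k + 1 + j) = tr!j + k + 1" using graft_nth_r[OF j, of tl] unfolding teq k_def by simp
      moreover have "w!(length c + 1 + j) = d!j + length c + 1" using j ld by (simp add: w_def)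
      moreover have "t!(n + (length c + 1 + j)) = w!(length c + 1 + j) + n"
      proof -
        have jj: "length c + 1 + j < m" using j ld mm by simp
        have "w!(length c + 1 + j) \<noteq> 1" using wbig[OF _ jj] by simp
        thus ?thesis using tw jj by blast
      qed
      ultimately show "tr!j = d!j" using kk by (simp add: add.assoc)
    qed
    ultimately show ?thesis using teq v_def by blast
  next
    case False
    have tla: "t ! length a = 1" using tv nn by (simp add: v_def)
    have kk: "k = length a"
    proof (rule ccontr)
      assume "k \<noteq> length a"
      then consider "k < length a" | "length a < k" by linarith
      thus False
      proof cases
        case 1 thus False using hgt[of "length a"] tla lt nn by simp
      next
        case 2
        show False
        proof (cases "k < n")
          case True
          have kb: "k - length a - 1 < length b" using True 2 nn by simp
          have "t!k = b!(k - length a - 1) + length a + 1" using tv True 2 nn by (simp add: v_def graft_nth_r')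
          moreover have "1 \<le> b!(k - length a - 1)" using name_bound[OF b kb] by blast
          ultimately show False using tk by linarith
        next
          case kn: False
          define j where "j = k - n"
          have j: "j < m" "k = n + j" using kn ltr lt unfolding j_def by auto
          have wj: "w!j = 1"
          proof (rule ccontr)
            assume "w!j \<noteq> 1"
            hence "t!(n+j) = w!j + n" using tw j by auto
            hence "t!k = w!j + n" using j by simp
            thus False using tk nn wpos[OF j(1)] by linarith
          qed
          have "j < length c"
          proof -
            have "j \<noteq> length c" using False tk j by auto
            moreover have "\<not> length c < j" using wbig[of j] wj j by auto
            ultimately show ?thesis by simp
          qed
          have c1: "t!(n + length c) \<le> n + 1" using tw wc mm by simp
          have "t!(n + length c) \<le> t!(n + j)"
            using name_cond[OF nt, of "n + j" "n + length c"] \<open>j < length c\<close> c1 lt mm by simp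
          moreover have "1 \<le> t!(n + length c)" using name_bound[OF nt, of "n + length c"] lt mm by simp
          ultimately show False using False tk j by simp
        qed
      qed
    qed
    have "tl = a"
    proof (rule nth_equalityI)
      show "length tl = length a" using kk k_def by simp
      fix i assume "i < length tl"
      thus "tl!i = a!i" using tlow tv kk k_def nn by (simp add: v_def)
    qed
    moreover have "tr \<in> SS b w"
    proof -
      have ltr2: "length tr = length b + length w" using ltr lt kk nn m_def by simp
      moreover have "\<forall>i<length b. tr!i = b!i"
      proof (intro allI impI)
        fix i assume i: "i < length b"
        have "i < length tr" using i ltr2 by simp
        hence "t!(k + 1 + i) = tr!i + k + 1" unfolding teq k_def by simp
        moreover have "t!(length a + 1 + i) = v!(length a + 1 + i)" using tv i nn by simp
        moreover have "v!(length a + 1 + i) = b!i + length a + 1" using i by (simp add: v_def)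
        ultimately show "tr!i = b!i" using kk by simp
      qed
      moreover have "\<forall>j<length w. (w!j = 1 \<longrightarrow> tr!(length b + j) \<le> length b + 1)
                    \<and> (w!j \<noteq> 1 \<longrightarrow> tr!(length b + j) = w!j + length b)"
      proof (intro allI impI)
        fix j assume j: "j < length w"
        have "length b + j < length tr" using j ltr2 by simp
        hence "t!(k + 1 + (length b + j)) = tr!(length b + j) + k + 1" unfolding teq k_def by simp
        moreover have "k + 1 + (length b + j) = n + j" using kk nn by simp
        ultimately have "t!(n + j) = tr!(length b + j) + length a + 1" using kk by metis
        thus "(w!j = 1 \<longrightarrow> tr!(length b + j) \<le> length b + 1)
                    \<and> (w!j \<noteq> 1 \<longrightarrow> tr!(length b + j) = w!j + length b)"
          using tw j nn m_def by auto
      qed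
      ultimately show ?thesis using ntr unfolding SS_def by blast
    qed
    ultimately show ?thesis using teq w_def by blast
  qed
qed


section \<open>Linear algebra of lin2\<close>

abbreviation fs :: "(nat list \<Rightarrow> 'a::field_char_0) \<Rightarrow> bool" where "fs f \<equiv> finite (supp f)"

lemma supp_bas[simp]: "supp (bas v :: nat list \<Rightarrow> 'a::field_char_0) = {v}"
  by (auto simp: supp_def bas_def)

lemma lin2_sup:
  assumes "finite A" "supp f \<subseteq> A" "finite B" "supp g \<subseteq> B"
  shows "lin2 b f g t = (\<Sum>v\<in>A. \<Sum>w\<in>B. f v * g w * b v w t)"
proof -
  have "lin2 b f g t = (\<Sum>v\<in>supp f. \<Sum>w\<in>B. f v * g w * b v w t)"
    unfolding lin2_def
  proof (rule sum.cong[OF refl])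
    fix v show "(\<Sum>w\<in>supp g. f v * g w * b v w t) = (\<Sum>w\<in>B. f v * g w * b v w t)"
      by (rule sum.mono_neutral_left) (use assms in \<open>auto simp: supp_def\<close>)
  qed
  also have "\<dots> = (\<Sum>v\<in>A. \<Sum>w\<in>B. f v * g w * b v w t)"
    by (rule sum.mono_neutral_left) (use assms in \<open>auto simp: supp_def\<close>)
  finally show ?thesis .
qed

lemma bas_same[simp]: "bas v v = 1"
  by (simp add: bas_def)

lemma lin2_bas_bas[simp]: "lin2 b (bas v) (bas w) = b v w"
  by (rule ext) (simp add: lin2_def)

lemma lin2_bas_left: "fs g \<Longrightarrow> lin2 b (bas v) g t = (\<Sum>w\<in>supp g. g w * b v w t)"
  by (simp add: lin2_def)

lemma lin2_bas_right: "fs f \<Longrightarrow> lin2 b f (bas w) t = (\<Sum>v\<in>supp f. f v * b v w t)"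
  by (simp add: lin2_def)

lemma lin2_left: "fs f \<Longrightarrow> fs g \<Longrightarrow> lin2 b f g t = (\<Sum>v\<in>supp f. f v * lin2 b (bas v) g t)"
  by (simp add: lin2_def lin2_bas_left sum_distrib_left mult.assoc)

lemma lin2_right: "fs f \<Longrightarrow> fs g \<Longrightarrow> lin2 b f g t = (\<Sum>w\<in>supp g. g w * lin2 b f (bas w) t)"
  unfolding lin2_def lin2_bas_right
  by (subst sum.swap) (simp add: sum_distrib_left mult_ac)

lemma supp_lin2: "supp (lin2 b f g) \<subseteq> (\<Union>v\<in>supp f. \<Union>w\<in>supp g. supp (b v w))"
proof
  fix t assume "t \<in> supp (lin2 b f g)"
  hence "(\<Sum>v\<in>supp f. \<Sum>w\<in>supp g. f v * g w * b v w t) \<noteq> 0" by (simp add: supp_def lin2_def)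
  then obtain v where v: "v \<in> supp f" "(\<Sum>w\<in>supp g. f v * g w * b v w t) \<noteq> 0"
    by (meson sum.not_neutral_contains_not_neutral)
  then obtain w where "w \<in> supp g" "f v * g w * b v w t \<noteq> 0"
    by (meson sum.not_neutral_contains_not_neutral)
  thus "t \<in> (\<Union>v\<in>supp f. \<Union>w\<in>supp g. supp (b v w))" using v by (auto simp: supp_def)
qed

lemma fs_lin2: "fs f \<Longrightarrow> fs g \<Longrightarrow> (\<And>v w. fs (b v w)) \<Longrightarrow> fs (lin2 b f g)"
  by (rule finite_subset[OF supp_lin2]) auto

lemma lin2_lin_left:
  assumes I: "finite I" and A: "finite A" "\<And>i. i \<in> I \<Longrightarrow> supp (G i) \<subseteq> A" "supp F \<subseteq> A"
    and h: "fs h" and F: "\<And>s. F s = (\<Sum>i\<in>I. c i * G i s)"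
  shows "lin2 b F h t = (\<Sum>i\<in>I. c i * lin2 b (G i) h t)"
proof -
  have "lin2 b F h t = (\<Sum>s\<in>A. \<Sum>u\<in>supp h. (\<Sum>i\<in>I. c i * G i s) * h u * b s u t)"
    using lin2_sup[OF A(1) A(3) h order_refl] F by simp
  also have "\<dots> = (\<Sum>s\<in>A. \<Sum>u\<in>supp h. \<Sum>i\<in>I. c i * (G i s * h u * b s u t))"
    by (simp only: sum_distrib_right) (simp add: mult_ac)
  also have "\<dots> = (\<Sum>s\<in>A. \<Sum>i\<in>I. \<Sum>u\<in>supp h. c i * (G i s * h u * b s u t))"
    by (rule sum.cong[OF refl], rule sum.swap)
  also have "\<dots> = (\<Sum>i\<in>I. \<Sum>s\<in>A. \<Sum>u\<in>supp h. c i * (G i s * h u * b s u t))"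
    by (rule sum.swap)
  also have "\<dots> = (\<Sum>i\<in>I. c i * lin2 b (G i) h t)"
  proof (rule sum.cong[OF refl])
    fix i assume "i \<in> I"
    thus "(\<Sum>s\<in>A. \<Sum>u\<in>supp h. c i * (G i s * h u * b s u t)) = c i * lin2 b (G i) h t"
      using lin2_sup[OF A(1) A(2) h order_refl] by (simp add: sum_distrib_left)
  qed
  finally show ?thesis .
qed

lemma lin2_lin_right:
  assumes I: "finite I" and A: "finite A" "\<And>i. i \<in> I \<Longrightarrow> supp (G i) \<subseteq> A" "supp F \<subseteq> A"
    and f: "fs f" and F: "\<And>s. F s = (\<Sum>i\<in>I. c i * G i s)"
  shows "lin2 b f F t = (\<Sum>i\<in>I. c i * lin2 b f (G i) t)"
proof -
  have "lin2 b f F t = (\<Sum>u\<in>supp f. \<Sum>s\<in>A. f u * (\<Sum>i\<in>I. c i * G i s) * b u s t)"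
    using lin2_sup[OF f order_refl A(1) A(3)] F by simp
  also have "\<dots> = (\<Sum>u\<in>supp f. \<Sum>s\<in>A. \<Sum>i\<in>I. c i * (f u * G i s * b u s t))"
    by (simp only: sum_distrib_right sum_distrib_left) (simp add: mult_ac)
  also have "\<dots> = (\<Sum>u\<in>supp f. \<Sum>i\<in>I. \<Sum>s\<in>A. c i * (f u * G i s * b u s t))"
    by (rule sum.cong[OF refl], rule sum.swap)
  also have "\<dots> = (\<Sum>i\<in>I. \<Sum>u\<in>supp f. \<Sum>s\<in>A. c i * (f u * G i s * b u s t))"
    by (rule sum.swap)
  also have "\<dots> = (\<Sum>i\<in>I. c i * lin2 b f (G i) t)"
  proof (rule sum.cong[OF refl])
    fix i assume "i \<in> I"
    thus "(\<Sum>u\<in>supp f. \<Sum>s\<in>A. c i * (f u * G i s * b u s t)) = c i * lin2 b f (G i) t"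
      using lin2_sup[OF f order_refl A(1) A(2)] by (simp add: sum_distrib_left)
  qed
  finally show ?thesis .
qed

lemma lin2_pairs: "fs f \<Longrightarrow> fs g \<Longrightarrow> lin2 b f g s = (\<Sum>p\<in>supp f \<times> supp g. (f (fst p) * g (snd p)) * b (fst p) (snd p) s)"
  unfolding lin2_def by (simp add: sum.cartesian_product case_prod_beta)

lemma GL:
  assumes f: "fs f" and g: "fs g" and h: "fs h" and b2: "\<And>v w. fs (b2 v w)"
  shows "lin2 b1 (lin2 b2 f g) h t = (\<Sum>v\<in>supp f. \<Sum>w\<in>supp g. f v * g w * lin2 b1 (b2 v w) h t)"
proof -
  let ?C = "\<Union>v\<in>supp f. \<Union>w\<in>supp g. supp (b2 v w)"
  have "lin2 b1 (lin2 b2 f g) h t = (\<Sum>p\<in>supp f \<times> supp g. (f (fst p) * g (snd p)) * lin2 b1 (b2 (fst p) (snd p)) h t)"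
  proof (rule lin2_lin_left[where A = ?C])
    show "finite ?C" using f g h b2 by blast
    show "supp (lin2 b2 f g) \<subseteq> ?C" by (rule supp_lin2)
    show "\<And>i. i \<in> supp f \<times> supp g \<Longrightarrow> supp (b2 (fst i) (snd i)) \<subseteq> ?C" by force
  qed (use f g h b2 in \<open>auto simp: lin2_pairs\<close>)
  also have "\<dots> = (\<Sum>v\<in>supp f. \<Sum>w\<in>supp g. f v * g w * lin2 b1 (b2 v w) h t)"
    by (simp add: sum.cartesian_product case_prod_beta)
  finally show ?thesis .
qed

lemma GR:
  assumes f: "fs f" and g: "fs g" and h: "fs h" and b2: "\<And>v w. fs (b2 v w)"
  shows "lin2 b1 f (lin2 b2 g h) t = (\<Sum>v\<in>supp g. \<Sum>w\<in>supp h. g v * h w * lin2 b1 f (b2 v w) t)"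
proof -
  let ?C = "\<Union>v\<in>supp g. \<Union>w\<in>supp h. supp (b2 v w)"
  have "lin2 b1 f (lin2 b2 g h) t = (\<Sum>p\<in>supp g \<times> supp h. (g (fst p) * h (snd p)) * lin2 b1 f (b2 (fst p) (snd p)) t)"
  proof (rule lin2_lin_right[where A = ?C])
    show "finite ?C" using f g h b2 by blast
    show "supp (lin2 b2 g h) \<subseteq> ?C" by (rule supp_lin2)
    show "\<And>i. i \<in> supp g \<times> supp h \<Longrightarrow> supp (b2 (fst i) (snd i)) \<subseteq> ?C" by force
  qed (use f g h b2 in \<open>auto simp: lin2_pairs\<close>)
  also have "\<dots> = (\<Sum>v\<in>supp g. \<Sum>w\<in>supp h. g v * h w * lin2 b1 f (b2 v w) t)"
    by (simp add: sum.cartesian_product case_prod_beta)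
  finally show ?thesis .
qed



lemma supp_lin2_sub: "(\<And>v w. v \<in> supp f \<Longrightarrow> w \<in> supp g \<Longrightarrow> supp (b v w) \<subseteq> S) \<Longrightarrow> supp (lin2 b f g) \<subseteq> S"
  using supp_lin2[of b f g] by blast

lemma supp_zero[simp]: "supp (0 :: nat list \<Rightarrow> 'a::zero) = {}"
  by (simp add: supp_def)

lemma supp_ind: "supp (\<lambda>t. if t \<in> S then (1::'a::field_char_0) else 0) = S"
  by (auto simp: supp_def)

lemma fs_star_b: "fs (star_b v w :: nat list \<Rightarrow> 'a::field_char_0)"
proof -
  have "supp (\<lambda>t. if t \<in> Nhat (length v + length w) \<and> list_all2 (\<le>) (nearrow v w) t
              \<and> list_all2 (\<le>) t (nwarrow v w) then (1::'a) else 0) \<subseteq> {t. name t \<and> length t = length v + length w}"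
    by (auto simp: supp_def Nhat_def)
  hence "fs (\<lambda>t. if t \<in> Nhat (length v + length w) \<and> list_all2 (\<le>) (nearrow v w) t
              \<and> list_all2 (\<le>) t (nwarrow v w) then (1::'a) else 0)"
    using finite_names finite_subset by blast
  thus ?thesis unfolding star_b_def by auto
qed

lemma fs_vee_b: "fs (vee_b v w :: nat list \<Rightarrow> 'a::field_char_0)"
  by (simp add: vee_b_def)

lemma supp_vee_b[simp]: "supp (vee_b v w :: nat list \<Rightarrow> 'a::field_char_0) = {graft v w}"
  by (simp add: vee_b_def)

lemma fs_bas: "fs (bas v :: nat list \<Rightarrow> 'a::field_char_0)" by simp

lemma fs_vee: "fs F \<Longrightarrow> fs G \<Longrightarrow> fs (vee F G)"
  unfolding vee_def by (rule fs_lin2) (auto simp: fs_vee_b)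

lemma fs_star: "fs F \<Longrightarrow> fs G \<Longrightarrow> fs (star F G)"
  unfolding star_def by (rule fs_lin2) (auto simp: fs_star_b)

lemma fs_prec_b: "fs (prec_b v w :: nat list \<Rightarrow> 'a::field_char_0)"
  unfolding prec_b_def by (auto intro!: fs_vee fs_star)

lemma fs_succ_b: "fs (succ_b v w :: nat list \<Rightarrow> 'a::field_char_0)"
  unfolding succ_b_def by (auto intro!: fs_vee fs_star)

lemma fs_prec: "fs F \<Longrightarrow> fs G \<Longrightarrow> fs (prec F G)"
  unfolding prec_def by (rule fs_lin2) (auto simp: fs_prec_b)

lemma fs_succ: "fs F \<Longrightarrow> fs G \<Longrightarrow> fs (succ F G)"
  unfolding succ_def by (rule fs_lin2) (auto simp: fs_succ_b)

lemma supp_star_b: "name v \<Longrightarrow> name w \<Longrightarrow> supp (star_b v w :: nat list \<Rightarrow> 'a::field_char_0) = SS v w"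
  by (simp add: star_b_SS supp_ind)

lemma SS_sub: "SS v w \<subseteq> {t. name t \<and> length t = length v + length w}"
  by (auto simp: SS_def)

lemma Vspace_iff: "F \<in> Vspace \<longleftrightarrow> fs F \<and> (\<forall>t\<in>supp F. name t)"
  by (auto simp: Vspace_def)

lemma Vstar_iff: "F \<in> Vstar \<longleftrightarrow> fs F \<and> (\<forall>t\<in>supp F. name t \<and> t \<noteq> [])"
  by (auto simp: Vstar_def Vspace_def supp_def)

lemma bas_Vspace: "name v \<Longrightarrow> bas v \<in> Vspace"
  by (simp add: Vspace_iff)

lemma bas_Vstar: "name v \<Longrightarrow> v \<noteq> [] \<Longrightarrow> bas v \<in> Vstar"
  by (simp add: Vstar_iff)

lemma star_b_Vspace: "name v \<Longrightarrow> name w \<Longrightarrow> star_b v w \<in> Vspace"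
  unfolding Vspace_iff using SS_sub[of v w] fs_star_b[of v w] supp_star_b[of v w] by blast

lemma star_b_Vstar: "name v \<Longrightarrow> name w \<Longrightarrow> v \<noteq> [] \<or> w \<noteq> [] \<Longrightarrow> star_b v w \<in> Vstar"
  unfolding Vstar_iff using SS_sub[of v w] fs_star_b[of v w] supp_star_b[of v w] by fastforce

lemma vee_Vstar: "F \<in> Vspace \<Longrightarrow> G \<in> Vspace \<Longrightarrow> vee F G \<in> Vstar"
  unfolding Vstar_iff
proof
  assume F: "F \<in> Vspace" and G: "G \<in> Vspace"
  thus "fs (vee F G)" by (simp add: Vspace_iff fs_vee)
  have "supp (vee F G) \<subseteq> {t. name t \<and> t \<noteq> []}" unfolding vee_def
    by (rule supp_lin2_sub) (use F G in \<open>auto simp: Vspace_iff intro: name_graft\<close>)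
  thus "\<forall>t\<in>supp (vee F G). name t \<and> t \<noteq> []" by blast
qed

lemma Vstar_Vspace: "F \<in> Vstar \<Longrightarrow> F \<in> Vspace" by (simp add: Vstar_def)

lemma star_Vspace: "F \<in> Vspace \<Longrightarrow> G \<in> Vspace \<Longrightarrow> star F G \<in> Vspace"
proof -
  assume F: "F \<in> Vspace" and G: "G \<in> Vspace"
  have "supp (star F G) \<subseteq> {t. name t}" unfolding star_def
    by (rule supp_lin2_sub) (use F G star_b_Vspace in \<open>auto simp: Vspace_iff\<close>)
  thus ?thesis using F G by (auto simp: Vspace_iff fs_star)
qed

lemma prec_b_Vstar: assumes v: "name v" and w: "name w" shows "prec_b v w \<in> Vstar"
proof -
  have "vee (bas (lft v)) (star (bas (rgt v)) (bas w)) \<in> Vstar" if "v \<noteq> []" "w \<noteq> []"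
    by (rule vee_Vstar) (use v w that name_decomp[OF v] name_decomp[OF w] in \<open>auto intro!: star_Vspace bas_Vspace\<close>)
  moreover have "bas v \<in> Vstar" if "v \<noteq> []" using bas_Vstar v w that by blast
  moreover have "(0::nat list \<Rightarrow> 'a) \<in> Vstar" by (simp add: Vstar_iff)
  ultimately show ?thesis unfolding prec_b_def by auto
qed

lemma succ_b_Vstar: assumes v: "name v" and w: "name w" shows "succ_b v w \<in> Vstar"
proof -
  have "vee (star (bas v) (bas (lft w))) (bas (rgt w)) \<in> Vstar" if "v \<noteq> []" "w \<noteq> []"
    by (rule vee_Vstar) (use v w that name_decomp[OF v] name_decomp[OF w] in \<open>auto intro!: star_Vspace bas_Vspace\<close>)
  moreover have "bas w \<in> Vstar" if "w \<noteq> []" using bas_Vstar v w that by blast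
  moreover have "(0::nat list \<Rightarrow> 'a) \<in> Vstar" by (simp add: Vstar_iff)
  ultimately show ?thesis unfolding succ_b_def by auto
qed

lemma prec_Vstar: "F \<in> Vspace \<Longrightarrow> G \<in> Vspace \<Longrightarrow> prec F G \<in> Vstar"
proof -
  assume F: "F \<in> Vspace" and G: "G \<in> Vspace"
  have "supp (prec F G) \<subseteq> {t. name t \<and> t \<noteq> []}" unfolding prec_def
  proof (rule supp_lin2_sub)
    fix v w assume "v \<in> supp F" "w \<in> supp G"
    hence "name v" "name w" using F G by (auto simp: Vspace_iff)
    hence "prec_b v w \<in> Vstar" by (rule prec_b_Vstar)
    thus "supp (prec_b v w) \<subseteq> {t. name t \<and> t \<noteq> []}" by (auto simp: Vstar_iff)
  qed
  thus ?thesis using F G by (auto simp: Vspace_iff Vstar_iff fs_prec)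
qed

lemma succ_Vstar: "F \<in> Vspace \<Longrightarrow> G \<in> Vspace \<Longrightarrow> succ F G \<in> Vstar"
proof -
  assume F: "F \<in> Vspace" and G: "G \<in> Vspace"
  have "supp (succ F G) \<subseteq> {t. name t \<and> t \<noteq> []}" unfolding succ_def
  proof (rule supp_lin2_sub)
    fix v w assume "v \<in> supp F" "w \<in> supp G"
    hence "name v" "name w" using F G by (auto simp: Vspace_iff)
    hence "succ_b v w \<in> Vstar" by (rule succ_b_Vstar)
    thus "supp (succ_b v w) \<subseteq> {t. name t \<and> t \<noteq> []}" by (auto simp: Vstar_iff)
  qed
  thus ?thesis using F G by (auto simp: Vspace_iff Vstar_iff fs_succ)
qed


lemma sum_bas: "fs x \<Longrightarrow> (\<Sum>v\<in>supp x. x v * bas v t) = x t"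
proof -
  assume "fs x"
  have "(\<Sum>v\<in>supp x. x v * bas v t) = (\<Sum>v\<in>supp x. if v = t then x v else 0)"
    by (rule sum.cong) (auto simp: bas_def)
  also have "\<dots> = x t" using \<open>fs x\<close> by (simp add: sum.delta) (simp add: supp_def)
  finally show ?thesis .
qed

lemma star_b_Nil_r[simp]: "star_b v [] = bas v" by (simp add: star_b_def)
lemma star_b_Nil_l[simp]: "star_b [] w = bas w" by (simp add: star_b_def)

lemma star_unit_r: "fs x \<Longrightarrow> star x (bas []) = x"
  by (rule ext) (simp add: star_def lin2_bas_right sum_bas)

lemma star_unit_l: "fs x \<Longrightarrow> star (bas []) x = x"
  by (rule ext) (simp add: star_def lin2_bas_left sum_bas mult.commute)

lemma star_bas[simp]: "star (bas v) (bas w) = star_b v w" by (simp add: star_def)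
lemma prec_bas[simp]: "prec (bas v) (bas w) = prec_b v w" by (simp add: prec_def)
lemma succ_bas[simp]: "succ (bas v) (bas w) = succ_b v w" by (simp add: succ_def)
lemma vee_bas[simp]: "vee (bas v) (bas w) = bas (graft v w)" by (simp add: vee_def vee_b_def)

lemma prec_b_ne: "v \<noteq> [] \<Longrightarrow> w \<noteq> [] \<Longrightarrow> prec_b v w = vee (bas (lft v)) (star_b (rgt v) w)"
  by (simp add: prec_b_def)
lemma succ_b_ne: "v \<noteq> [] \<Longrightarrow> w \<noteq> [] \<Longrightarrow> succ_b v w = vee (star_b v (lft w)) (bas (rgt w))"
  by (simp add: succ_b_def)

lemma prec_b_graft: "name a \<Longrightarrow> name s \<Longrightarrow> u \<noteq> [] \<Longrightarrow> prec_b (graft a s) u = vee (bas a) (star_b s u)"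
  by (simp add: prec_b_ne)
lemma succ_b_graft: "name s \<Longrightarrow> name d \<Longrightarrow> v \<noteq> [] \<Longrightarrow> succ_b v (graft s d) = vee (star_b v s) (bas d)"
  by (simp add: succ_b_ne)

lemma vee_b_eq: "vee_b a s = bas (graft a s)" by (simp add: vee_b_def)

lemma fsV: "F \<in> Vspace \<Longrightarrow> fs F" by (simp add: Vspace_iff)
lemma nameV: "F \<in> Vspace \<Longrightarrow> s \<in> supp F \<Longrightarrow> name s" by (simp add: Vspace_iff)

lemma PL:
  assumes a: "name a" and F: "F \<in> Vspace" and u: "u \<noteq> []"
  shows "prec (vee (bas a) F) (bas u) = vee (bas a) (star F (bas u))"
proof (rule ext)
  fix t
  have "prec (vee (bas a) F) (bas u) t = (\<Sum>s\<in>supp F. F s * lin2 prec_b (vee_b a s) (bas u) t)"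
    unfolding prec_def vee_def by (subst GL) (auto simp: fs_vee_b fsV[OF F])
  also have "\<dots> = (\<Sum>s\<in>supp F. F s * lin2 vee_b (bas a) (star_b s u) t)"
    by (rule sum.cong[OF refl]) (simp add: vee_b_eq prec_b_graft[OF a nameV[OF F] u] vee_def)
  also have "\<dots> = vee (bas a) (star F (bas u)) t"
    unfolding vee_def star_def by (subst GR) (auto simp: fs_star_b fsV[OF F])
  finally show "prec (vee (bas a) F) (bas u) t = vee (bas a) (star F (bas u)) t" .
qed

lemma PR:
  assumes v: "name v" "v \<noteq> []" and F: "F \<in> Vstar"
  shows "prec (bas v) F = vee (bas (lft v)) (star (bas (rgt v)) F)"
proof (rule ext)
  fix t
  have FV: "F \<in> Vspace" using F by (rule Vstar_Vspace)
  have ne: "s \<in> supp F \<Longrightarrow> s \<noteq> []" for s using F by (auto simp: Vstar_iff)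
  have "prec (bas v) F t = (\<Sum>s\<in>supp F. F s * prec_b v s t)"
    unfolding prec_def by (simp add: lin2_bas_left fsV[OF FV])
  also have "\<dots> = (\<Sum>s\<in>supp F. F s * lin2 vee_b (bas (lft v)) (star_b (rgt v) s) t)"
    by (rule sum.cong[OF refl]) (simp add: prec_b_ne[OF v(2) ne] vee_def)
  also have "\<dots> = vee (bas (lft v)) (star (bas (rgt v)) F) t"
    unfolding vee_def star_def by (subst GR) (auto simp: fs_star_b fsV[OF FV])
  finally show "prec (bas v) F t = vee (bas (lft v)) (star (bas (rgt v)) F) t" .
qed

lemma QL:
  assumes G: "G \<in> Vspace" and d: "name d" and u: "u \<noteq> []"
  shows "prec (vee G (bas d)) (bas u) = vee G (star (bas d) (bas u))"
proof (rule ext)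
  fix t
  have "prec (vee G (bas d)) (bas u) t = (\<Sum>s\<in>supp G. G s * lin2 prec_b (vee_b s d) (bas u) t)"
    unfolding prec_def vee_def by (subst GL) (auto simp: fs_vee_b fsV[OF G])
  also have "\<dots> = (\<Sum>s\<in>supp G. G s * lin2 vee_b (bas s) (star_b d u) t)"
    by (rule sum.cong[OF refl]) (simp add: vee_b_eq prec_b_graft[OF nameV[OF G] d u] vee_def)
  also have "\<dots> = vee G (star (bas d) (bas u)) t"
    unfolding vee_def star_bas by (subst lin2_left) (auto simp: fs_star_b fsV[OF G])
  finally show "prec (vee G (bas d)) (bas u) t = vee G (star (bas d) (bas u)) t" .
qed

lemma QR:
  assumes v: "v \<noteq> []" and a: "name a" and F: "F \<in> Vspace"
  shows "succ (bas v) (vee (bas a) F) = vee (star (bas v) (bas a)) F"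
proof (rule ext)
  fix t
  have "succ (bas v) (vee (bas a) F) t = (\<Sum>s\<in>supp F. F s * lin2 succ_b (bas v) (vee_b a s) t)"
    unfolding succ_def vee_def by (subst GR) (auto simp: fs_vee_b fsV[OF F])
  also have "\<dots> = (\<Sum>s\<in>supp F. F s * lin2 vee_b (star_b v a) (bas s) t)"
    by (rule sum.cong[OF refl]) (simp add: vee_b_eq succ_b_graft[OF a nameV[OF F] v] vee_def)
  also have "\<dots> = vee (star (bas v) (bas a)) F t"
    unfolding vee_def star_bas by (subst lin2_right[of _ F]) (auto simp: fs_star_b fsV[OF F])
  finally show "succ (bas v) (vee (bas a) F) t = vee (star (bas v) (bas a)) F t" .
qed

lemma SL:
  assumes F: "F \<in> Vspace" and u: "name u" "u \<noteq> []"
  shows "succ F (bas u) = vee (star F (bas (lft u))) (bas (rgt u))"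
proof (rule ext)
  fix t
  have dec: "name (lft u)" "name (rgt u)" "u = graft (lft u) (rgt u)" using name_decomp[OF u] by auto
  have "succ F (bas u) t = (\<Sum>s\<in>supp F. F s * succ_b s u t)"
    unfolding succ_def by (simp add: lin2_bas_right fsV[OF F])
  also have "\<dots> = (\<Sum>s\<in>supp F. F s * lin2 vee_b (star_b s (lft u)) (bas (rgt u)) t)"
  proof (rule sum.cong[OF refl])
    fix s assume "s \<in> supp F"
    have "succ_b s u = vee (star_b s (lft u)) (bas (rgt u))"
    proof (cases "s = []")
      case True
      have "succ_b s u = bas (graft (lft u) (rgt u))" using True u dec by (simp add: succ_b_def)
      thus ?thesis using True by simp
    qed (simp add: succ_b_ne u)
    hence "succ_b s u t = vee (star_b s (lft u)) (bas (rgt u)) t" by (rule fun_cong)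
    thus "F s * succ_b s u t = F s * lin2 vee_b (star_b s (lft u)) (bas (rgt u)) t" unfolding vee_def by (rule arg_cong)
  qed
  also have "\<dots> = vee (star F (bas (lft u))) (bas (rgt u)) t"
    unfolding vee_def star_def by (subst GL) (auto simp: fs_star_b fsV[OF F])
  finally show "succ F (bas u) t = vee (star F (bas (lft u))) (bas (rgt u)) t" .
qed

lemma SR:
  assumes v: "v \<noteq> []" and G: "G \<in> Vspace" and d: "name d"
  shows "succ (bas v) (vee G (bas d)) = vee (star (bas v) G) (bas d)"
proof (rule ext)
  fix t
  have "succ (bas v) (vee G (bas d)) t = (\<Sum>s\<in>supp G. G s * lin2 succ_b (bas v) (vee_b s d) t)"
    unfolding succ_def vee_def by (subst GR) (auto simp: fs_vee_b fsV[OF G])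
  also have "\<dots> = (\<Sum>s\<in>supp G. G s * lin2 vee_b (star_b v s) (bas d) t)"
    by (rule sum.cong[OF refl]) (simp add: vee_b_eq succ_b_graft[OF nameV[OF G] d v] vee_def)
  also have "\<dots> = vee (star (bas v) G) (bas d) t"
    unfolding vee_def star_def by (subst GL) (auto simp: fs_star_b fsV[OF G])
  finally show "succ (bas v) (vee G (bas d)) t = vee (star (bas v) G) (bas d) t" .
qed


section \<open>The recursion star = prec + succ on basis names\<close>

lemma sum_ind_inj:
  assumes "finite S" "inj_on g S"
  shows "(\<Sum>s\<in>S. if t = g s then (1::'a::field_char_0) else 0) = (if t \<in> g ` S then 1 else 0)"
proof (cases "t \<in> g ` S")
  case True
  then obtain s0 where s0: "s0 \<in> S" "t = g s0" by blast
  have "(\<Sum>s\<in>S. if t = g s then (1::'a) else 0) = (\<Sum>s\<in>S. if s = s0 then 1 else 0)"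
    by (rule sum.cong[OF refl]) (use assms(2) s0 in \<open>auto dest: inj_onD\<close>)
  also have "\<dots> = 1" using assms(1) s0(1) by simp
  finally show ?thesis using True by simp
next
  case False
  hence "\<forall>s\<in>S. t \<noteq> g s" by blast
  thus ?thesis using False by simp
qed

abbreviation ind :: "nat list set \<Rightarrow> nat list \<Rightarrow> 'a::field_char_0" where
  "ind S \<equiv> (\<lambda>t. if t \<in> S then 1 else 0)"

lemma VI1:
  assumes a: "name a" and S: "finite S" "\<forall>s\<in>S. name s"
  shows "vee (bas a) (ind S) t = (if t \<in> graft a ` S then (1::'a::field_char_0) else 0)"
proof -
  have "vee (bas a) (ind S) t = (\<Sum>s\<in>S. if t = graft a s then (1::'a) else 0)"
  proof -
    have "fs (ind S :: nat list \<Rightarrow> 'a)" using S by (simp add: supp_ind)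
    thus ?thesis unfolding vee_def lin2_bas_left[OF \<open>fs (ind S)\<close>] supp_ind
      by (simp add: vee_b_def bas_def)
  qed
  also have "\<dots> = (if t \<in> graft a ` S then 1 else 0)"
    by (rule sum_ind_inj[OF S(1)]) (use a S(2) graft_inj in \<open>auto simp: inj_on_def\<close>)
  finally show ?thesis .
qed

lemma VI2:
  assumes d: "name d" and S: "finite S" "\<forall>s\<in>S. name s"
  shows "vee (ind S) (bas d) t = (if t \<in> (\<lambda>s. graft s d) ` S then (1::'a::field_char_0) else 0)"
proof -
  have "vee (ind S) (bas d) t = (\<Sum>s\<in>S. if t = graft s d then (1::'a) else 0)"
  proof -
    have "fs (ind S :: nat list \<Rightarrow> 'a)" using S by (simp add: supp_ind)
    thus ?thesis unfolding vee_def lin2_bas_right[OF \<open>fs (ind S)\<close>] supp_ind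
      by (simp add: vee_b_def bas_def)
  qed
  also have "\<dots> = (if t \<in> (\<lambda>s. graft s d) ` S then 1 else 0)"
    by (rule sum_ind_inj[OF S(1)]) (use d S(2) graft_inj in \<open>auto simp: inj_on_def\<close>)
  finally show ?thesis .
qed

lemma finite_SS: "finite (SS v w)"
  using finite_subset[OF SS_sub finite_names] .

lemma R:
  assumes v: "name v" "v \<noteq> []" and w: "name w" "w \<noteq> []"
  shows "star_b v w = prec_b v w + (succ_b v w :: nat list \<Rightarrow> 'a::field_char_0)"
proof (rule ext)
  fix t
  obtain a b where ab: "name a" "name b" "v = graft a b" "lft v = a" "rgt v = b" using name_decomp[OF v] by blast
  obtain c d where cd: "name c" "name d" "w = graft c d" "lft w = c" "rgt w = d" using name_decomp[OF w] by blast
  have SSn: "\<forall>s\<in>SS x y. name s" for x y using SS_sub by blast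
  have "(prec_b v w :: nat list \<Rightarrow> 'a) = vee (bas a) (star_b b w)"
    using prec_b_ne[OF v(2) w(2)] ab(4,5) by simp
  also have "star_b b w = (ind (SS b w) :: nat list \<Rightarrow> 'a)" by (rule star_b_SS[OF ab(2) w(1)])
  finally have p0: "(prec_b v w :: nat list \<Rightarrow> 'a) = vee (bas a) (ind (SS b w))" .
  have p: "prec_b v w t = (if t \<in> graft a ` SS b w then (1::'a) else 0)"
    unfolding p0 by (rule VI1[OF ab(1) finite_SS SSn])
  have "(succ_b v w :: nat list \<Rightarrow> 'a) = vee (star_b v c) (bas d)"
    using succ_b_ne[OF v(2) w(2)] cd(4,5) by simp
  also have "star_b v c = (ind (SS v c) :: nat list \<Rightarrow> 'a)" by (rule star_b_SS[OF v(1) cd(1)])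
  finally have s0: "(succ_b v w :: nat list \<Rightarrow> 'a) = vee (ind (SS v c)) (bas d)" .
  have s: "succ_b v w t = (if t \<in> (\<lambda>s. graft s d) ` SS v c then (1::'a) else 0)"
    unfolding s0 by (rule VI2[OF cd(2) finite_SS SSn])
  have st: "star_b v w t = (if t \<in> SS v w then (1::'a) else 0)" by (simp add: star_b_SS[OF v(1) w(1)])
  have iff: "t \<in> SS v w \<longleftrightarrow> t \<in> graft a ` SS b w \<or> t \<in> (\<lambda>s. graft s d) ` SS v c"
    using SS_rec1[OF ab(1,2) cd(1,2)] SS_rec2[OF ab(1,2) cd(1,2)] SS_rec3[OF ab(1,2) cd(1,2)] ab(3) cd(3)
    by blast
  have ex: "\<not> (t \<in> graft a ` SS b w \<and> t \<in> (\<lambda>s. graft s d) ` SS v c)"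
    using SS_excl[OF ab(1,2) cd(1,2)] ab(3) cd(3) by blast
  show "(star_b v w t :: 'a) = (prec_b v w + succ_b v w) t"
    using p s st iff ex by auto
qed


section \<open>Associativity and the dendriform identities on basis names\<close>

lemma lin2_add_left:
  assumes "fs f" "fs f'" "fs g"
  shows "lin2 b (f + f') g = lin2 b f g + lin2 b f' g"
proof (rule ext)
  fix t
  let ?A = "supp f \<union> supp f'"
  have fA: "finite ?A" using assms by simp
  have "supp (f + f') \<subseteq> ?A" by (auto simp: supp_def)
  hence "lin2 b (f + f') g t = (\<Sum>v\<in>?A. \<Sum>w\<in>supp g. (f + f') v * g w * b v w t)"
    by (rule lin2_sup[OF fA _ assms(3) order_refl])
  also have "\<dots> = (\<Sum>v\<in>?A. \<Sum>w\<in>supp g. f v * g w * b v w t) + (\<Sum>v\<in>?A. \<Sum>w\<in>supp g. f' v * g w * b v w t)"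
    by (simp add: distrib_right sum.distrib)
  also have "\<dots> = lin2 b f g t + lin2 b f' g t"
    using lin2_sup[OF fA _ assms(3) order_refl, of f b t] lin2_sup[OF fA _ assms(3) order_refl, of f' b t] by simp
  finally show "lin2 b (f + f') g t = (lin2 b f g + lin2 b f' g) t" by simp
qed

lemma lin2_add_right:
  assumes "fs f" "fs g" "fs g'"
  shows "lin2 b f (g + g') = lin2 b f g + lin2 b f g'"
proof (rule ext)
  fix t
  let ?B = "supp g \<union> supp g'"
  have fB: "finite ?B" using assms by simp
  have "supp (g + g') \<subseteq> ?B" by (auto simp: supp_def)
  hence "lin2 b f (g + g') t = (\<Sum>v\<in>supp f. \<Sum>w\<in>?B. f v * (g + g') w * b v w t)"
    by (rule lin2_sup[OF assms(1) order_refl fB])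
  also have "\<dots> = (\<Sum>v\<in>supp f. \<Sum>w\<in>?B. f v * g w * b v w t) + (\<Sum>v\<in>supp f. \<Sum>w\<in>?B. f v * g' w * b v w t)"
    by (simp add: distrib_right distrib_left sum.distrib)
  also have "\<dots> = lin2 b f g t + lin2 b f g' t"
    using lin2_sup[OF assms(1) order_refl fB, of g b t] lin2_sup[OF assms(1) order_refl fB, of g' b t] by simp
  finally show "lin2 b f (g + g') t = (lin2 b f g + lin2 b f g') t" by simp
qed

lemma lin2_add_b: "lin2 b f g + lin2 b' f g = lin2 (\<lambda>v w. b v w + b' v w) f g"
  by (rule ext) (simp add: lin2_def sum.distrib distrib_left)

lemma lin2_cong: "(\<And>v w. v \<in> supp f \<Longrightarrow> w \<in> supp g \<Longrightarrow> b v w = b' v w) \<Longrightarrow> lin2 b f g = lin2 b' f g"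
  unfolding lin2_def by (rule ext) (auto intro!: sum.cong)

lemma PS:
  assumes F: "F \<in> Vstar" and G: "G \<in> Vstar"
  shows "star F G = prec F G + succ F G"
proof -
  have "star F G = lin2 (\<lambda>v w. prec_b v w + succ_b v w) F G"
    unfolding star_def by (rule lin2_cong) (use F G R in \<open>auto simp: Vstar_iff\<close>)
  thus ?thesis by (simp add: prec_def succ_def lin2_add_b)
qed

lemma fs_Vstar: "F \<in> Vstar \<Longrightarrow> fs F" by (simp add: Vstar_iff)

definition ASSOC :: "nat list \<Rightarrow> nat list \<Rightarrow> nat list \<Rightarrow> 'a::field_char_0 itself \<Rightarrow> bool" where
  "ASSOC a b c T \<longleftrightarrow> star (star_b a b :: nat list \<Rightarrow> 'a) (bas c) = star (bas a) (star_b b c)"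

lemma D2:
  assumes a: "name a" "a \<noteq> []" and b: "name b" "b \<noteq> []" and c: "name c" "c \<noteq> []"
  shows "prec (succ_b a b :: nat list \<Rightarrow> 'a::field_char_0) (bas c) = succ (bas a) (prec_b b c)"
proof -
  have db: "name (lft b)" "name (rgt b)" using name_decomp[OF b] by auto
  have "prec (succ_b a b :: nat list \<Rightarrow> 'a) (bas c) = prec (vee (star_b a (lft b)) (bas (rgt b))) (bas c)"
    by (simp add: succ_b_ne a b)
  also have "\<dots> = vee (star_b a (lft b)) (star_b (rgt b) c)"
    using QL[OF star_b_Vspace[OF a(1) db(1)] db(2) c(2)] by simp
  also have "\<dots> = succ (bas a) (vee (bas (lft b)) (star_b (rgt b) c))"
    by (simp add: QR[OF a(2) db(1) star_b_Vspace[OF db(2) c(1)]])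
  also have "\<dots> = succ (bas a) (prec_b b c)" by (simp add: prec_b_ne b c)
  finally show ?thesis .
qed

lemma D1_from:
  assumes a: "name a" "a \<noteq> []" and b: "name b" "b \<noteq> []" and c: "name c" "c \<noteq> []"
    and IH: "ASSOC (rgt a) b c (TYPE('a::field_char_0))"
  shows "prec (prec_b a b :: nat list \<Rightarrow> 'a) (bas c) = prec (bas a) (star_b b c)"
proof -
  have da: "name (lft a)" "name (rgt a)" using name_decomp[OF a] by auto
  have "prec (prec_b a b :: nat list \<Rightarrow> 'a) (bas c) = prec (vee (bas (lft a)) (star_b (rgt a) b)) (bas c)"
    by (simp add: prec_b_ne a b)
  also have "\<dots> = vee (bas (lft a)) (star (star_b (rgt a) b) (bas c))"
    by (rule PL[OF da(1) star_b_Vspace[OF da(2) b(1)] c(2)])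
  also have "\<dots> = vee (bas (lft a)) (star (bas (rgt a)) (star_b b c))"
    using IH by (simp add: ASSOC_def)
  also have "\<dots> = prec (bas a) (star_b b c)"
    by (rule PR[OF a star_b_Vstar[OF b(1) c(1)], symmetric]) (use b in simp)
  finally show ?thesis .
qed

lemma D3_from:
  assumes a: "name a" "a \<noteq> []" and b: "name b" "b \<noteq> []" and c: "name c" "c \<noteq> []"
    and IH: "ASSOC a b (lft c) (TYPE('a::field_char_0))"
  shows "succ (star_b a b :: nat list \<Rightarrow> 'a) (bas c) = succ (bas a) (succ_b b c)"
proof -
  have dc: "name (lft c)" "name (rgt c)" using name_decomp[OF c] by auto
  have "succ (star_b a b :: nat list \<Rightarrow> 'a) (bas c) = vee (star (star_b a b) (bas (lft c))) (bas (rgt c))"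
    by (rule SL[OF star_b_Vspace[OF a(1) b(1)] c])
  also have "\<dots> = vee (star (bas a) (star_b b (lft c))) (bas (rgt c))"
    using IH by (simp add: ASSOC_def)
  also have "\<dots> = succ (bas a) (vee (star_b b (lft c)) (bas (rgt c)))"
    by (rule SR[OF a(2) star_b_Vspace[OF b(1) dc(1)] dc(2), symmetric])
  also have "\<dots> = succ (bas a) (succ_b b c)" by (simp add: succ_b_ne b c)
  finally show ?thesis .
qed

lemma ASSOC_from:
  assumes a: "name a" "a \<noteq> []" and b: "name b" "b \<noteq> []" and c: "name c" "c \<noteq> []"
    and d1: "prec (prec_b a b :: nat list \<Rightarrow> 'a::field_char_0) (bas c) = prec (bas a) (star_b b c)"
    and d3: "succ (star_b a b :: nat list \<Rightarrow> 'a) (bas c) = succ (bas a) (succ_b b c)"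
  shows "ASSOC a b c (TYPE('a))"
proof -
  have d2: "prec (succ_b a b :: nat list \<Rightarrow> 'a) (bas c) = succ (bas a) (prec_b b c)" by (rule D2[OF a b c])
  have V1: "star_b a b \<in> Vstar" using star_b_Vstar[OF a(1) b(1)] a by auto
  have V2: "star_b b c \<in> Vstar" using star_b_Vstar[OF b(1) c(1)] b by auto
  have L: "star (star_b a b :: nat list \<Rightarrow> 'a) (bas c) = prec (star_b a b) (bas c) + succ (star_b a b) (bas c)"
    by (rule PS[OF V1 bas_Vstar[OF c]])
  have X: "prec (star_b a b :: nat list \<Rightarrow> 'a) (bas c) = prec (prec_b a b) (bas c) + prec (succ_b a b) (bas c)"
    unfolding R[OF a b] prec_def by (rule lin2_add_left) (simp_all add: fs_prec_b fs_succ_b)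
  have Rh: "star (bas a) (star_b b c :: nat list \<Rightarrow> 'a) = prec (bas a) (star_b b c) + succ (bas a) (star_b b c)"
    by (rule PS[OF bas_Vstar[OF a] V2])
  have Y: "succ (bas a) (star_b b c :: nat list \<Rightarrow> 'a) = succ (bas a) (prec_b b c) + succ (bas a) (succ_b b c)"
    unfolding R[OF b c] succ_def by (rule lin2_add_right) (simp_all add: fs_prec_b fs_succ_b)
  have "star (star_b a b :: nat list \<Rightarrow> 'a) (bas c) = star (bas a) (star_b b c)"
    unfolding L X Rh Y d1 d2 d3 by (rule add.assoc)
  thus ?thesis unfolding ASSOC_def .
qed

lemma assoc_all: "name a \<Longrightarrow> name b \<Longrightarrow> name c \<Longrightarrow> ASSOC a b c (TYPE('a::field_char_0))"
proof (induction "length a + length b + length c" arbitrary: a b c rule: less_induct)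
  case less
  show ?case
  proof (cases "a = [] \<or> b = [] \<or> c = []")
    case True
    have fs1: "fs (star_b b c :: nat list \<Rightarrow> 'a)" by (rule fs_star_b)
    have fs2: "fs (star_b a b :: nat list \<Rightarrow> 'a)" by (rule fs_star_b)
    from True show ?thesis unfolding ASSOC_def
    proof (elim disjE)
      assume "a = []" thus "star (star_b a b :: nat list \<Rightarrow> 'a) (bas c) = star (bas a) (star_b b c)"
        using star_unit_l[OF fs1] by simp
    next
      assume "b = []" thus "star (star_b a b :: nat list \<Rightarrow> 'a) (bas c) = star (bas a) (star_b b c)"
        by simp
    next
      assume "c = []" thus "star (star_b a b :: nat list \<Rightarrow> 'a) (bas c) = star (bas a) (star_b b c)"
        using star_unit_r[OF fs2] by simp
    qed
  next
    case False
    hence ne: "a \<noteq> []" "b \<noteq> []" "c \<noteq> []" by auto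
    have da: "name (rgt a)" "a = graft (lft a) (rgt a)" using name_decomp[OF less.prems(1) ne(1)] by auto
    have dc: "name (lft c)" "c = graft (lft c) (rgt c)" using name_decomp[OF less.prems(3) ne(3)] by auto
    have "length (rgt a) < length a" using arg_cong[OF da(2), of length] by simp
    hence "ASSOC (rgt a) b c (TYPE('a))" using less.hyps[of "rgt a" b c] da(1) less.prems by simp
    hence d1: "prec (prec_b a b :: nat list \<Rightarrow> 'a) (bas c) = prec (bas a) (star_b b c)"
      using D1_from less.prems ne by blast
    have "length (lft c) < length c" using arg_cong[OF dc(2), of length] by simp
    hence "ASSOC a b (lft c) (TYPE('a))" using less.hyps[of a b "lft c"] dc(1) less.prems by simp
    hence d3: "succ (star_b a b :: nat list \<Rightarrow> 'a) (bas c) = succ (bas a) (succ_b b c)"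
      using D3_from less.prems ne by blast
    show ?thesis using ASSOC_from less.prems ne d1 d3 by blast
  qed
qed



section \<open>Basis identities including the empty name\<close>

lemma lin2_zero_left[simp]: "lin2 b 0 g = 0"
  by (rule ext) (simp add: lin2_def)
lemma lin2_zero_right[simp]: "lin2 b f 0 = 0"
  by (rule ext) (simp add: lin2_def)

lemma lin2_zero_b: "(\<And>v w. v \<in> supp f \<Longrightarrow> w \<in> supp g \<Longrightarrow> b v w = 0) \<Longrightarrow> lin2 b f g = 0"
  by (rule ext) (simp add: lin2_def)

lemma prec_zero[simp]: "prec 0 g = 0" "prec f 0 = 0" by (simp_all add: prec_def)
lemma succ_zero[simp]: "succ 0 g = 0" "succ f 0 = 0" by (simp_all add: succ_def)

lemma prec_b_Nil_l[simp]: "prec_b [] w = 0" by (simp add: prec_b_def)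
lemma succ_b_Nil_r[simp]: "succ_b v [] = 0" by (simp add: succ_b_def)
lemma prec_b_Nil_r: "v \<noteq> [] \<Longrightarrow> prec_b v [] = bas v" by (simp add: prec_b_def)
lemma succ_b_Nil_l: "w \<noteq> [] \<Longrightarrow> succ_b [] w = bas w" by (simp add: succ_b_def)

lemma prec_Nil_l: "prec (bas []) F = 0"
  unfolding prec_def by (rule lin2_zero_b) simp
lemma succ_Nil_r: "succ F (bas []) = 0"
  unfolding succ_def by (rule lin2_zero_b) simp

lemma prec_unit_r: "F \<in> Vstar \<Longrightarrow> prec F (bas []) = F"
proof (rule ext)
  fix t assume F: "F \<in> Vstar"
  have "prec F (bas []) t = (\<Sum>s\<in>supp F. F s * prec_b s [] t)"
    unfolding prec_def by (rule lin2_bas_right[OF fs_Vstar[OF F]])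
  also have "\<dots> = (\<Sum>s\<in>supp F. F s * bas s t)"
    by (rule sum.cong[OF refl]) (use F in \<open>simp add: Vstar_iff prec_b_Nil_r\<close>)
  also have "\<dots> = F t" by (rule sum_bas[OF fs_Vstar[OF F]])
  finally show "prec F (bas []) t = F t" .
qed

lemma succ_unit_l: "F \<in> Vstar \<Longrightarrow> succ (bas []) F = F"
proof (rule ext)
  fix t assume F: "F \<in> Vstar"
  have "succ (bas []) F t = (\<Sum>s\<in>supp F. F s * succ_b [] s t)"
    unfolding succ_def by (rule lin2_bas_left[OF fs_Vstar[OF F]])
  also have "\<dots> = (\<Sum>s\<in>supp F. F s * bas s t)"
    by (rule sum.cong[OF refl]) (use F in \<open>simp add: Vstar_iff succ_b_Nil_l\<close>)
  also have "\<dots> = F t" by (rule sum_bas[OF fs_Vstar[OF F]])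
  finally show "succ (bas []) F t = F t" .
qed

lemma D1:
  assumes a: "name a" "a \<noteq> []" and b: "name b" "b \<noteq> []" and c: "name c" "c \<noteq> []"
  shows "prec (prec_b a b :: nat list \<Rightarrow> 'a::field_char_0) (bas c) = prec (bas a) (star_b b c)"
  by (rule D1_from[OF a b c assoc_all]) (use name_decomp[OF a] b c in auto)

lemma D3:
  assumes a: "name a" "a \<noteq> []" and b: "name b" "b \<noteq> []" and c: "name c" "c \<noteq> []"
  shows "succ (star_b a b :: nat list \<Rightarrow> 'a::field_char_0) (bas c) = succ (bas a) (succ_b b c)"
  by (rule D3_from[OF a b c assoc_all]) (use name_decomp[OF c] a b in auto)

lemma B1:
  assumes v: "name v" and w: "name w" and u: "name u" and ne: "\<not> (v = [] \<and> w = [])"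
  shows "prec (prec_b v w :: nat list \<Rightarrow> 'a::field_char_0) (bas u) = prec (bas v) (star_b w u)"
proof (cases "u = []")
  case True
  thus ?thesis using prec_unit_r[OF prec_b_Vstar[OF v w]] by simp
next
  case u0: False
  show ?thesis
  proof (cases "w = []")
    case True
    hence "v \<noteq> []" using ne by simp
    thus ?thesis using True by (simp add: prec_b_Nil_r)
  next
    case w0: False
    show ?thesis
    proof (cases "v = []")
      case True thus ?thesis using w0 by (simp add: prec_Nil_l)
    next
      case False thus ?thesis using D1 v w u u0 w0 by blast
    qed
  qed
qed

lemma B2:
  assumes v: "name v" and w: "name w" and u: "name u" and ne: "\<not> (v = [] \<and> w = [])" "\<not> (w = [] \<and> u = [])"
  shows "prec (succ_b v w :: nat list \<Rightarrow> 'a::field_char_0) (bas u) = succ (bas v) (prec_b w u)"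
proof (cases "w = []")
  case True thus ?thesis by (simp add: prec_def succ_def)
next
  case w0: False
  show ?thesis
  proof (cases "v = []")
    case True thus ?thesis using w0 by (simp add: succ_b_Nil_l succ_unit_l[OF prec_b_Vstar[OF w u]])
  next
    case v0: False
    show ?thesis
    proof (cases "u = []")
      case True thus ?thesis using prec_unit_r[OF succ_b_Vstar[OF v w]] w0 by (simp add: prec_b_Nil_r)
    next
      case False thus ?thesis using D2 v w u v0 w0 by blast
    qed
  qed
qed

lemma B3:
  assumes v: "name v" and w: "name w" and u: "name u" and ne: "\<not> (w = [] \<and> u = [])"
  shows "succ (star_b v w :: nat list \<Rightarrow> 'a::field_char_0) (bas u) = succ (bas v) (succ_b w u)"
proof (cases "u = []")
  case True thus ?thesis by (simp add: succ_Nil_r)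
next
  case u0: False
  show ?thesis
  proof (cases "w = []")
    case True thus ?thesis using u0 by (simp add: succ_b_Nil_l)
  next
    case w0: False
    show ?thesis
    proof (cases "v = []")
      case True thus ?thesis by (simp add: succ_unit_l[OF succ_b_Vstar[OF w u]])
    next
      case False thus ?thesis using D3 v w u u0 w0 by blast
    qed
  qed
qed

section \<open>Trilinear extension\<close>

lemma TRI:
  fixes X Y Z :: "nat list \<Rightarrow> 'a::field_char_0"
  assumes "finite A" "finite B" "finite C"
    and eq: "\<And>v w u. v \<in> A \<Longrightarrow> w \<in> B \<Longrightarrow> u \<in> C \<Longrightarrow> L v w u = R v w u"
  shows "(\<Sum>v\<in>A. \<Sum>w\<in>B. X v * Y w * (\<Sum>u\<in>C. Z u * L v w u))
       = (\<Sum>w\<in>B. \<Sum>u\<in>C. Y w * Z u * (\<Sum>v\<in>A. X v * R v w u))"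
proof -
  have "(\<Sum>v\<in>A. \<Sum>w\<in>B. X v * Y w * (\<Sum>u\<in>C. Z u * L v w u))
      = (\<Sum>v\<in>A. \<Sum>w\<in>B. \<Sum>u\<in>C. X v * Y w * Z u * R v w u)"
    by (simp add: sum_distrib_left mult.assoc eq)
  also have "\<dots> = (\<Sum>w\<in>B. \<Sum>v\<in>A. \<Sum>u\<in>C. X v * Y w * Z u * R v w u)"
    by (rule sum.swap)
  also have "\<dots> = (\<Sum>w\<in>B. \<Sum>u\<in>C. \<Sum>v\<in>A. X v * Y w * Z u * R v w u)"
    by (rule sum.cong[OF refl], rule sum.swap)
  also have "\<dots> = (\<Sum>w\<in>B. \<Sum>u\<in>C. Y w * Z u * (\<Sum>v\<in>A. X v * R v w u))"
    by (simp add: sum_distrib_left mult_ac)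
  finally show ?thesis .
qed

lemma TRI_gen:
  fixes x y z :: "nat list \<Rightarrow> 'a::field_char_0"
  assumes x: "fs x" and y: "fs y" and z: "fs z"
    and b2: "\<And>v w. fs (b2 v w :: nat list \<Rightarrow> 'a)" and b2': "\<And>v w. fs (b2' v w :: nat list \<Rightarrow> 'a)"
    and eq: "\<And>v w u. v \<in> supp x \<Longrightarrow> w \<in> supp y \<Longrightarrow> u \<in> supp z \<Longrightarrow>
               lin2 b1 (b2 v w) (bas u) = lin2 b1' (bas v) (b2' w u)"
  shows "lin2 b1 (lin2 b2 x y) z = lin2 b1' x (lin2 b2' y z)"
proof (rule ext)
  fix t
  have "lin2 b1 (lin2 b2 x y) z t = (\<Sum>v\<in>supp x. \<Sum>w\<in>supp y. x v * y w * (\<Sum>u\<in>supp z. z u * lin2 b1 (b2 v w) (bas u) t))"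
    by (simp add: GL[OF x y z b2] lin2_right[OF b2 z])
  also have "\<dots> = (\<Sum>w\<in>supp y. \<Sum>u\<in>supp z. y w * z u * (\<Sum>v\<in>supp x. x v * lin2 b1' (bas v) (b2' w u) t))"
    by (rule TRI) (use x y z eq in auto)
  also have "\<dots> = lin2 b1' x (lin2 b2' y z) t"
    by (simp add: GR[OF x y z b2'] lin2_left[OF x b2'])
  finally show "lin2 b1 (lin2 b2 x y) z t = lin2 b1' x (lin2 b2' y z) t" .
qed

lemma supp_Nil: "F [] \<noteq> 0 \<longleftrightarrow> [] \<in> supp F" by (simp add: supp_def)

lemma T1:
  assumes x: "x \<in> Vspace" and y: "y \<in> Vspace" and z: "z \<in> Vspace" and c: "\<not> (x [] \<noteq> 0 \<and> y [] \<noteq> 0)"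
  shows "prec (prec x y) z = prec (x :: nat list \<Rightarrow> 'a::field_char_0) (star y z)"
  unfolding prec_def star_def
proof (rule TRI_gen[OF fsV[OF x] fsV[OF y] fsV[OF z] fs_prec_b fs_star_b])
  fix v w u assume h: "v \<in> supp x" "w \<in> supp y" "u \<in> supp z"
  have "\<not> (v = [] \<and> w = [])" using c h by (auto simp: supp_def)
  thus "lin2 prec_b (prec_b v w :: nat list \<Rightarrow> 'a) (bas u) = lin2 prec_b (bas v) (star_b w u)"
    using B1[OF nameV[OF x h(1)] nameV[OF y h(2)] nameV[OF z h(3)]] by (simp add: prec_def)
qed

lemma T2:
  assumes x: "x \<in> Vspace" and y: "y \<in> Vspace" and z: "z \<in> Vspace"
    and c: "\<not> (x [] \<noteq> 0 \<and> y [] \<noteq> 0)" "\<not> (y [] \<noteq> 0 \<and> z [] \<noteq> 0)"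
  shows "prec (succ x y) z = succ (x :: nat list \<Rightarrow> 'a::field_char_0) (prec y z)"
  unfolding prec_def succ_def
proof (rule TRI_gen[OF fsV[OF x] fsV[OF y] fsV[OF z] fs_succ_b fs_prec_b])
  fix v w u assume h: "v \<in> supp x" "w \<in> supp y" "u \<in> supp z"
  have "\<not> (v = [] \<and> w = [])" "\<not> (w = [] \<and> u = [])" using c h by (auto simp: supp_def)
  thus "lin2 prec_b (succ_b v w :: nat list \<Rightarrow> 'a) (bas u) = lin2 succ_b (bas v) (prec_b w u)"
    using B2[OF nameV[OF x h(1)] nameV[OF y h(2)] nameV[OF z h(3)]] by (simp add: prec_def succ_def)
qed

lemma T3:
  assumes x: "x \<in> Vspace" and y: "y \<in> Vspace" and z: "z \<in> Vspace"
    and c: "\<not> (y [] \<noteq> 0 \<and> z [] \<noteq> 0)"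
  shows "succ (star x y) z = succ (x :: nat list \<Rightarrow> 'a::field_char_0) (succ y z)"
  unfolding star_def succ_def
proof (rule TRI_gen[OF fsV[OF x] fsV[OF y] fsV[OF z] fs_star_b fs_succ_b])
  fix v w u assume h: "v \<in> supp x" "w \<in> supp y" "u \<in> supp z"
  have "\<not> (w = [] \<and> u = [])" using c h by (auto simp: supp_def)
  thus "lin2 succ_b (star_b v w :: nat list \<Rightarrow> 'a) (bas u) = lin2 succ_b (bas v) (succ_b w u)"
    using B3[OF nameV[OF x h(1)] nameV[OF y h(2)] nameV[OF z h(3)]] by (simp add: succ_def)
qed


lemma sum_fun_apply: "(\<Sum>v\<in>S. g v) t = (\<Sum>v\<in>S. g v t)"
  by (induction S rule: infinite_finite_induct) simp_all

lemma zero_Vstar: "0 \<in> Vstar" by (simp add: Vstar_iff)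

lemma add_Vstar: "x \<in> Vstar \<Longrightarrow> y \<in> Vstar \<Longrightarrow> x + y \<in> Vstar"
proof -
  assume x: "x \<in> Vstar" and y: "y \<in> Vstar"
  have "supp (x + y) \<subseteq> supp x \<union> supp y" by (auto simp: supp_def)
  thus ?thesis using x y unfolding Vstar_iff by (meson UnE finite_Un finite_subset subsetD)
qed

lemma supp_smul: "supp (smul c x) \<subseteq> supp x" by (auto simp: supp_def smul_def)

lemma smul_Vstar: "x \<in> Vstar \<Longrightarrow> smul c x \<in> Vstar"
  using supp_smul[of c x] unfolding Vstar_iff by (meson finite_subset subsetD)

lemma lin2_smul_left: "fs f \<Longrightarrow> fs g \<Longrightarrow> lin2 b (smul c f) g = smul c (lin2 b f g)"
proof (rule ext)
  fix t assume f: "fs f" and g: "fs g"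
  have "lin2 b (smul c f) g t = (\<Sum>v\<in>supp f. \<Sum>w\<in>supp g. smul c f v * g w * b v w t)"
    by (rule lin2_sup[OF f supp_smul g order_refl])
  also have "\<dots> = c * lin2 b f g t" by (simp add: lin2_def smul_def sum_distrib_left mult.assoc)
  finally show "lin2 b (smul c f) g t = smul c (lin2 b f g) t" by (simp add: smul_def)
qed

lemma lin2_smul_right: "fs f \<Longrightarrow> fs g \<Longrightarrow> lin2 b f (smul c g) = smul c (lin2 b f g)"
proof (rule ext)
  fix t assume f: "fs f" and g: "fs g"
  have "lin2 b f (smul c g) t = (\<Sum>v\<in>supp f. \<Sum>w\<in>supp g. f v * smul c g w * b v w t)"
    by (rule lin2_sup[OF f order_refl g supp_smul])
  also have "\<dots> = c * lin2 b f g t" by (simp add: lin2_def smul_def sum_distrib_left mult_ac)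
  finally show "lin2 b f (smul c g) t = smul c (lin2 b f g) t" by (simp add: smul_def)
qed

lemma dendri: "dendriform (Vstar :: (nat list \<Rightarrow> 'a::field_char_0) set) prec succ"
proof -
  have fs: "fs x" if "x \<in> (Vstar :: (nat list \<Rightarrow> 'a) set)" for x using that by (rule fs_Vstar)
  have V: "x \<in> Vspace" if "x \<in> (Vstar :: (nat list \<Rightarrow> 'a) set)" for x using that by (rule Vstar_Vspace)
  have n0: "x [] = 0" if "x \<in> (Vstar :: (nat list \<Rightarrow> 'a) set)" for x using that by (simp add: Vstar_def)
  have c1: "\<forall>x\<in>(Vstar :: (nat list \<Rightarrow> 'a) set). \<forall>y\<in>Vstar. prec x y \<in> Vstar \<and> succ x y \<in> Vstar"
    using prec_Vstar succ_Vstar V by blast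
  have c2: "\<forall>x\<in>(Vstar :: (nat list \<Rightarrow> 'a) set). \<forall>y\<in>Vstar. \<forall>z\<in>Vstar.
      prec (x + y) z = prec x z + prec y z \<and> prec z (x + y) = prec z x + prec z y
    \<and> succ (x + y) z = succ x z + succ y z \<and> succ z (x + y) = succ z x + succ z y"
    unfolding prec_def succ_def using fs lin2_add_left lin2_add_right by blast
  have c3: "\<forall>c. \<forall>x\<in>(Vstar :: (nat list \<Rightarrow> 'a) set). \<forall>y\<in>Vstar.
      prec (smul c x) y = smul c (prec x y) \<and> prec x (smul c y) = smul c (prec x y)
    \<and> succ (smul c x) y = smul c (succ x y) \<and> succ x (smul c y) = smul c (succ x y)"
    unfolding prec_def succ_def using fs lin2_smul_left lin2_smul_right by blast
  have c4: "\<forall>x\<in>(Vstar :: (nat list \<Rightarrow> 'a) set). \<forall>y\<in>Vstar. \<forall>z\<in>Vstar.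
        prec (prec x y) z = prec x (prec y z + succ y z) \<and>
        prec (succ x y) z = succ x (prec y z) \<and>
        succ (prec x y + succ x y) z = succ x (succ y z)"
  proof (intro ballI conjI)
    fix x y z :: "nat list \<Rightarrow> 'a" assume x: "x \<in> Vstar" and y: "y \<in> Vstar" and z: "z \<in> Vstar"
    show "prec (prec x y) z = prec x (prec y z + succ y z)"
      using T1[OF V[OF x] V[OF y] V[OF z]] n0[OF x] PS[OF y z] by simp
    show "prec (succ x y) z = succ x (prec y z)"
      using T2[OF V[OF x] V[OF y] V[OF z]] n0[OF x] n0[OF y] by simp
    show "succ (prec x y + succ x y) z = succ x (succ y z)"
      using T3[OF V[OF x] V[OF y] V[OF z]] n0[OF y] PS[OF x y] by simp
  qed
  show ?thesis unfolding dendriform_def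
    using zero_Vstar add_Vstar smul_Vstar c1 c2 c3 c4 by blast
qed

section \<open>Generation\<close>

lemma one_graft: "[1] = graft [] []" by (simp add: graft_def)
lemma name_one: "name [1]" by (subst one_graft) (rule name_graft[OF name_Nil name_Nil])
lemma lft_one[simp]: "lft [1] = []" by (subst one_graft) (simp add: name_Nil)
lemma rgt_one[simp]: "rgt [1] = []" by (subst one_graft) (simp add: name_Nil)
lemma lft_one'[simp]: "lft [Suc 0] = []" using lft_one by simp
lemma rgt_one'[simp]: "rgt [Suc 0] = []" using rgt_one by simp

abbreviation GG :: "(nat list \<Rightarrow> 'a::field_char_0) set" where "GG \<equiv> gen_by prec succ (bas [1])"

lemma gen_sub: "x \<in> GG \<Longrightarrow> x \<in> Vstar"
proof (induction rule: gen_by.induct)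
  case gen_base thus ?case using bas_Vstar[OF name_one] by simp
next
  case gen_zero thus ?case by (rule zero_Vstar)
next
  case (gen_add x y) thus ?case by (blast intro: add_Vstar)
next
  case (gen_smul x c) thus ?case by (blast intro: smul_Vstar)
next
  case (gen_l x y) thus ?case using prec_Vstar Vstar_Vspace by blast
next
  case (gen_r x y) thus ?case using succ_Vstar Vstar_Vspace by blast
qed

lemma bas_gen: "name v \<Longrightarrow> v \<noteq> [] \<Longrightarrow> (bas v :: nat list \<Rightarrow> 'a::field_char_0) \<in> GG"
proof (induction rule: name.induct)
  case name_Nil thus ?case by simp
next
  case (name_graft a b)
  have one: "(bas [1] :: nat list \<Rightarrow> 'a) \<in> GG" by (rule gen_base)
  have left: "(bas (graft a []) :: nat list \<Rightarrow> 'a) \<in> GG" if "a \<noteq> []"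
  proof -
    have "succ (bas a) (bas [1]) = (bas (graft a []) :: nat list \<Rightarrow> 'a)"
      using that by (simp add: succ_b_def)
    moreover have "succ (bas a) (bas [1]) \<in> (GG :: (nat list \<Rightarrow> 'a) set)"
      by (rule gen_r[OF name_graft.IH(1)[OF that] one])
    ultimately show ?thesis by simp
  qed
  show ?case
  proof (cases "b = []")
    case True
    thus ?thesis using left one one_graft by (cases "a = []") auto
  next
    case b: False
    have "bas (graft a b) = (prec (bas (graft a [])) (bas b) :: nat list \<Rightarrow> 'a)"
      using b name_graft.hyps by (simp add: prec_b_graft name_Nil)
    moreover have "bas (graft a b) = (prec (bas [1]) (bas b) :: nat list \<Rightarrow> 'a)" if "a = []"
      using b that by (simp add: prec_b_def)
    moreover have "prec (bas [1]) (bas b) \<in> (GG :: (nat list \<Rightarrow> 'a) set)"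
      by (rule gen_l[OF one name_graft.IH(2)[OF b]])
    moreover have "prec (bas (graft a [])) (bas b) \<in> (GG :: (nat list \<Rightarrow> 'a) set)" if "a \<noteq> []"
      by (rule gen_l[OF left[OF that] name_graft.IH(2)[OF b]])
    ultimately show ?thesis by (cases "a = []") auto
  qed
qed

lemma Vstar_gen: "(f :: nat list \<Rightarrow> 'a::field_char_0) \<in> Vstar \<Longrightarrow> f \<in> GG"
proof -
  assume f: "f \<in> Vstar"
  have "S \<subseteq> supp f \<Longrightarrow> (\<Sum>v\<in>S. smul (f v) (bas v)) \<in> (GG :: (nat list \<Rightarrow> 'a) set)" if "finite S" for S
    using that
  proof (induction S rule: finite_induct)
    case empty show ?case by (simp only: sum.empty) (rule gen_zero)
  next
    case (insert v S)
    have "bas v \<in> (GG :: (nat list \<Rightarrow> 'a) set)" using insert.prems f bas_gen by (auto simp: Vstar_iff)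
    hence "smul (f v) (bas v) \<in> (GG :: (nat list \<Rightarrow> 'a) set)" by (rule gen_smul)
    moreover have "(\<Sum>v\<in>S. smul (f v) (bas v)) \<in> (GG :: (nat list \<Rightarrow> 'a) set)" using insert by simp
    ultimately have "smul (f v) (bas v) + (\<Sum>v\<in>S. smul (f v) (bas v)) \<in> (GG :: (nat list \<Rightarrow> 'a) set)"
      by (rule gen_add)
    thus ?case by (subst sum.insert[OF insert(1,2)])
  qed
  hence "(\<Sum>v\<in>supp f. smul (f v) (bas v)) \<in> (GG :: (nat list \<Rightarrow> 'a) set)" using fs_Vstar[OF f] by blast
  moreover have "(\<Sum>v\<in>supp f. smul (f v) (bas v)) = f"
    by (rule ext) (simp add: sum_fun_apply smul_def sum_bas[OF fs_Vstar[OF f]])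
  ultimately show ?thesis by simp
qed

lemma gen_eq: "(GG :: (nat list \<Rightarrow> 'a::field_char_0) set) = Vstar"
  using gen_sub Vstar_gen by blast


theorem mainTheorem12:
  shows "dendriform (Vstar :: (nat list \<Rightarrow> 'a::field_char_0) set) prec succ
    \<and> (\<forall>x\<in>(Vstar :: (nat list \<Rightarrow> 'a) set). \<forall>y\<in>Vstar. prec x y + succ x y = star x y)
    \<and> gen_by prec succ (bas [1]) = (Vstar :: (nat list \<Rightarrow> 'a) set)
    \<and> (\<forall>x\<in>(Vspace :: (nat list \<Rightarrow> 'a) set). \<forall>y\<in>Vspace. \<forall>z\<in>Vspace.
         (\<forall>L R. Option.bind (prec_o x y) (\<lambda>a. prec_o a z) = Some L
                \<longrightarrow> prec_o x (star y z) = Some R \<longrightarrow> L = R)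
       \<and> (\<forall>L R. Option.bind (succ_o x y) (\<lambda>a. prec_o a z) = Some L
                \<longrightarrow> Option.bind (prec_o y z) (\<lambda>b. succ_o x b) = Some R \<longrightarrow> L = R)
       \<and> (\<forall>L R. succ_o (star x y) z = Some L
                \<longrightarrow> Option.bind (succ_o y z) (\<lambda>b. succ_o x b) = Some R \<longrightarrow> L = R))
    \<and> (\<forall>x\<in>(Vspace :: (nat list \<Rightarrow> 'a) set). star x (bas []) = x \<and> star (bas []) x = x)"
proof (intro conjI)
  show "dendriform (Vstar :: (nat list \<Rightarrow> 'a::field_char_0) set) prec succ" by (rule dendri)
  show "\<forall>x\<in>(Vstar :: (nat list \<Rightarrow> 'a) set). \<forall>y\<in>Vstar. prec x y + succ x y = star x y"
    using PS by (metis (no_types))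
  show "gen_by prec succ (bas [1]) = (Vstar :: (nat list \<Rightarrow> 'a) set)" by (rule gen_eq)
  show "\<forall>x\<in>(Vspace :: (nat list \<Rightarrow> 'a) set). star x (bas []) = x \<and> star (bas []) x = x"
    using star_unit_r star_unit_l fsV by blast
  show "\<forall>x\<in>(Vspace :: (nat list \<Rightarrow> 'a) set). \<forall>y\<in>Vspace. \<forall>z\<in>Vspace.
         (\<forall>L R. Option.bind (prec_o x y) (\<lambda>a. prec_o a z) = Some L
                \<longrightarrow> prec_o x (star y z) = Some R \<longrightarrow> L = R)
       \<and> (\<forall>L R. Option.bind (succ_o x y) (\<lambda>a. prec_o a z) = Some L
                \<longrightarrow> Option.bind (prec_o y z) (\<lambda>b. succ_o x b) = Some R \<longrightarrow> L = R)
       \<and> (\<forall>L R. succ_o (star x y) z = Some L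
                \<longrightarrow> Option.bind (succ_o y z) (\<lambda>b. succ_o x b) = Some R \<longrightarrow> L = R)"
  proof (intro ballI conjI allI impI)
    fix x y z :: "nat list \<Rightarrow> 'a" and L R
    assume x: "x \<in> Vspace" and y: "y \<in> Vspace" and z: "z \<in> Vspace"
    {
      assume h1: "Option.bind (prec_o x y) (\<lambda>a. prec_o a z) = Some L" and h2: "prec_o x (star y z) = Some R"
      have c: "\<not> (x [] \<noteq> 0 \<and> y [] \<noteq> 0)" using h1 by (auto simp: prec_o_def split: if_splits)
      have "L = prec (prec x y) z" using h1 c by (auto simp: prec_o_def split: if_splits)
      moreover have "R = prec x (star y z)" using h2 by (auto simp: prec_o_def split: if_splits)
      ultimately show "L = R" using T1[OF x y z c] by simp
    }
    {
      assume h1: "Option.bind (succ_o x y) (\<lambda>a. prec_o a z) = Some L"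
        and h2: "Option.bind (prec_o y z) (\<lambda>b. succ_o x b) = Some R"
      have c1: "\<not> (x [] \<noteq> 0 \<and> y [] \<noteq> 0)" using h1 by (auto simp: succ_o_def split: if_splits)
      have c2: "\<not> (y [] \<noteq> 0 \<and> z [] \<noteq> 0)" using h2 by (auto simp: prec_o_def split: if_splits)
      have "L = prec (succ x y) z" using h1 c1 by (auto simp: prec_o_def succ_o_def split: if_splits)
      moreover have "R = succ x (prec y z)" using h2 c2 by (auto simp: prec_o_def succ_o_def split: if_splits)
      ultimately show "L = R" using T2[OF x y z c1 c2] by simp
    }
    {
      assume h1: "succ_o (star x y) z = Some L"
        and h2: "Option.bind (succ_o y z) (\<lambda>b. succ_o x b) = Some R"
      have c2: "\<not> (y [] \<noteq> 0 \<and> z [] \<noteq> 0)" using h2 by (auto simp: succ_o_def split: if_splits)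
      have "L = succ (star x y) z" using h1 by (auto simp: succ_o_def split: if_splits)
      moreover have "R = succ x (succ y z)" using h2 c2 by (auto simp: succ_o_def split: if_splits)
      ultimately show "L = R" using T3[OF x y z c2] by simp
    }
  qed
qed

end
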